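(* At any point during the execution of $\mathit{find\_ap\_set}$, let $t$ be an odd vertex whose even mate $t'$ is completely scanned, and let $s$ be an odd descendant of $t$ in the search structure. Then after any later blossom step that makes $s$ even, $s$ and $t$ belong to the same blossom.
   Context: Let $H$ be a finite undirected graph with a matching $M_H$ (free vertices, $\mathit{mate}$, alternating and augmenting paths as usual). The procedure $\mathit{find\_ap\_set}$ maintains a search structure $S$ (a forest of alternating trees whose nodes are odd vertices and blossoms = sets of even vertices with a base; $b(x)$ denotes the base of the blossom containing an even vertex $x$) and a set $\mathit{CP}$ of vertex-disjoint augmenting paths, both initially empty. For each free vertex $f$ in turn: if $f$ is not on a path of $\mathit{CP}$, add $f$ to $S$ as the root of a new tree (a trivial even blossom) and call $\mathit{find\_ap}(f)$. The recursive call $\mathit{find\_ap}(x)$, for $x$ even, scans each non-matching edge $xy$ in turn: if $y\notin S$ and $y$ is free, add $xy$ to $S$, add the path formed by the canonical path of $x$ followed by $y$ to $\mathit{CP}$, and terminate every currently executing call of $\mathit{find\_ap}$ (the outer loop then continues with the next free vertex); if $y\notin S$ and $y$ is matched (grow step), add $y$ as odd child of $b(x)$ and $y'=\mathit{mate}(y)$ as even child of $y$, and call $\mathit{find\_ap}(y')$; if $y\in S$ and $b(y)$ is even and a proper descendant of $b(x)$ in $S$ (blossom step), let $u_1,\dots,u_k$ be the odd vertices on the tree path from $b(x)$ to $b(y)$ with $u_1$ closest to $b(x)$, merge all blossoms and odd vertices on this path into one blossom with base $b(x)$ (so $u_1,\dots,u_k$ become even), and call $\mathit{find\_ap}(u_1),\dots,\mathit{find\_ap}(u_k)$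 in this order; otherwise do nothing. Vertices in $S$ remain in $S$ between trees. An even vertex $x$ is completely scanned if $\mathit{find\_ap}(x)$ has been called and was not terminated prematurely (so all non-matching edges at $x$ have been scanned). *)

theory Defs
  imports Main
begin

definition graph :: "'v set \<Rightarrow> 'v set set \<Rightarrow> bool" where
  "graph V E \<longleftrightarrow> finite V \<and> (\<forall>e\<in>E. \<exists>u v. e = {u, v} \<and> u \<noteq> v \<and> u \<in> V \<and> v \<in> V)"

definition matching :: "'v set set \<Rightarrow> bool" where
  "matching M \<longleftrightarrow> (\<forall>e1\<in>M. \<forall>e2\<in>M. e1 \<noteq> e2 \<longrightarrow> e1 \<inter> e2 = {})"

definition matched :: "'v set set \<Rightarrow> 'v \<Rightarrow> bool" where
  "matched M v \<longleftrightarrow> (\<exists>u. {u, v} \<in> M)"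

definition mate :: "'v set set \<Rightarrow> 'v \<Rightarrow> 'v" where
  "mate M v = (THE u. {u, v} \<in> M)"

definition nm_nbrs :: "'v set set \<Rightarrow> 'v set set \<Rightarrow> 'v \<Rightarrow> 'v set" where
  "nm_nbrs E M x = {y. {x, y} \<in> E \<and> {x, y} \<notin> M}"

datatype lbl = Odd | Even

text \<open>A frame of the recursion stack: either a running call find_ap(x) with the set of
  non-matching neighbours still to be scanned, or the list of calls find_ap(u_i),...,find_ap(u_k)
  still to be made after a blossom step (after which the frame below continues).\<close>
datatype 'v frame = Scan 'v "'v set" | Calls "'v list"

record 'v st =
  lab :: "'v \<Rightarrow> lbl option"   \<comment> \<open>None: not in S; Some Odd / Some Even\<close>
  par :: "'v \<Rightarrow> 'v"            \<comment> \<open>for an odd vertex y: the even vertex x with xy in S\<close>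
  bse :: "'v \<Rightarrow> 'v"            \<comment> \<open>for an even vertex x: the base b(x) of its blossom\<close>
  cp  :: "('v \<times> 'v) set"       \<comment> \<open>CP, each path recorded by its two (free) end vertices\<close>
  stk :: "'v frame list"
  rest :: "'v list"             \<comment> \<open>free vertices not yet handled by the outer loop\<close>
  scanned :: "'v set"           \<comment> \<open>completely scanned even vertices\<close>
  cur_root :: "'v"              \<comment> \<open>root of the tree currently being searched\<close>

definition init_st :: "'v list \<Rightarrow> 'v st" where
  "init_st fs = \<lparr>lab = (\<lambda>_. None), par = (\<lambda>v. v), bse = (\<lambda>v. v), cp = {}, stk = [],
                 rest = fs, scanned = {}, cur_root = undefined\<rparr>"

text \<open>Nodes of S are odd vertices and blossoms (a blossom is represented by its base).\<close>
definition node_parent :: "'v set set \<Rightarrow> 'v st \<Rightarrow> 'v \<Rightarrow> 'v option" where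
  "node_parent M s v =
     (case lab s v of
        Some Odd \<Rightarrow> Some (bse s (par s v))
      | Some Even \<Rightarrow> (if bse s v = v \<and> matched M v then Some (mate M v) else None)
      | None \<Rightarrow> None)"

definition tree_rel :: "'v set set \<Rightarrow> 'v st \<Rightarrow> ('v \<times> 'v) set" where
  "tree_rel M s = {(c, p). node_parent M s c = Some p}"

definition proper_desc :: "'v set set \<Rightarrow> 'v st \<Rightarrow> 'v \<Rightarrow> 'v \<Rightarrow> bool" where
  "proper_desc M s d a \<longleftrightarrow> (d, a) \<in> (tree_rel M s)\<^sup>+"

definition next_tree_step :: "'v set set \<Rightarrow> 'v set set \<Rightarrow> 'v st \<Rightarrow> 'v st \<Rightarrow> bool" where
  "next_tree_step E M s s' \<longleftrightarrow>
     stk s = [] \<and>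
     (\<exists>f fs. rest s = f # fs \<and>
        (if (\<exists>p\<in>cp s. f = fst p \<or> f = snd p)
         then s' = s\<lparr>rest := fs\<rparr>
         else s' = s\<lparr>lab := (lab s)(f := Some Even), bse := (bse s)(f := f),
                      stk := [Scan f (nm_nbrs E M f)], rest := fs,
                      cur_root := f\<rparr>))"

definition finish_step :: "'v st \<Rightarrow> 'v st \<Rightarrow> bool" where
  "finish_step s s' \<longleftrightarrow>
     (\<exists>x rs. stk s = Scan x {} # rs \<and> s' = s\<lparr>stk := rs, scanned := insert x (scanned s)\<rparr>)"

definition calls_step :: "'v set set \<Rightarrow> 'v set set \<Rightarrow> 'v st \<Rightarrow> 'v st \<Rightarrow> bool" where
  "calls_step E M s s' \<longleftrightarrow>
     (\<exists>rs. stk s = Calls [] # rs \<and> s' = s\<lparr>stk := rs\<rparr>) \<or>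
     (\<exists>u us rs. stk s = Calls (u # us) # rs \<and>
                s' = s\<lparr>stk := Scan u (nm_nbrs E M u) # Calls us # rs\<rparr>)"

text \<open>Scanning a non-matching edge xy (in an arbitrary order): augmenting, grow, or nothing.\<close>
definition scan_step :: "'v set set \<Rightarrow> 'v set set \<Rightarrow> 'v st \<Rightarrow> 'v st \<Rightarrow> bool" where
  "scan_step E M s s' \<longleftrightarrow>
     (\<exists>x R rs y. stk s = Scan x R # rs \<and> y \<in> R \<and>
        (if lab s y = None \<and> \<not> matched M y then
           \<comment> \<open>augmenting path found: add xy to S, the path to CP, terminate all calls\<close>
           s' = s\<lparr>lab := (lab s)(y := Some Odd), par := (par s)(y := x),
                  cp := insert (cur_root s, y) (cp s), stk := []\<rparr>
         else if lab s y = None \<and> matched M y then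
           \<comment> \<open>grow step\<close>
           s' = s\<lparr>lab := (lab s)(y := Some Odd, mate M y := Some Even),
                  par := (par s)(y := x), bse := (bse s)(mate M y := mate M y),
                  stk := Scan (mate M y) (nm_nbrs E M (mate M y)) # Scan x (R - {y}) # rs\<rparr>
         else if lab s y = Some Even \<and> proper_desc M s (bse s y) (bse s x) then False
         else s' = s\<lparr>stk := Scan x (R - {y}) # rs\<rparr>))"

text \<open>P is the set of nodes on the tree path from b(y) to b(x); us = [u_1,...,u_k] lists the odd
  vertices on it with u_1 closest to b(x).\<close>
definition blossom_step :: "'v set set \<Rightarrow> 'v set set \<Rightarrow> 'v st \<Rightarrow> 'v st \<Rightarrow> bool" where
  "blossom_step E M s s' \<longleftrightarrow>
     (\<exists>x R rs y us.
        stk s = Scan x R # rs \<and> y \<in> R \<and>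
        lab s y = Some Even \<and> proper_desc M s (bse s y) (bse s x) \<and>
        (let P = {n. (bse s y, n) \<in> (tree_rel M s)\<^sup>* \<and> (n, bse s x) \<in> (tree_rel M s)\<^sup>*};
             inB = (\<lambda>v. (v \<in> P \<and> lab s v = Some Odd) \<or> (lab s v = Some Even \<and> bse s v \<in> P))
         in distinct us \<and> set us = {v \<in> P. lab s v = Some Odd} \<and>
            sorted_wrt (\<lambda>a b. proper_desc M s b a) us \<and>
            s' = s\<lparr>lab := (\<lambda>v. if inB v then Some Even else lab s v),
                   bse := (\<lambda>v. if inB v then bse s x else bse s v),
                   stk := Calls us # Scan x (R - {y}) # rs\<rparr>))"

definition step :: "'v set set \<Rightarrow> 'v set set \<Rightarrow> 'v st \<Rightarrow> 'v st \<Rightarrow> bool" where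
  "step E M s s' \<longleftrightarrow> next_tree_step E M s s' \<or> finish_step s s' \<or> calls_step E M s s' \<or>
                     scan_step E M s s' \<or> blossom_step E M s s'"

text \<open>run 0, ..., run n is an execution (prefix) of find_ap_set, where fs lists the free
  vertices in the order handled by the outer loop.\<close>
definition execution ::
  "'v set set \<Rightarrow> 'v set set \<Rightarrow> 'v list \<Rightarrow> (nat \<Rightarrow> 'v st) \<Rightarrow> nat \<Rightarrow> bool" where
  "execution E M fs run n \<longleftrightarrow> run 0 = init_st fs \<and> (\<forall>k<n. step E M (run k) (run (Suc k)))"

end

theory Submission
  imports Defs
begin

lemma tree_rel_iff: "(c, p) \<in> tree_rel M s \<longleftrightarrow> node_parent M s c = Some p"
  by (simp add: tree_rel_def)

lemma sv_tree_rel: "single_valued (tree_rel M s)"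
  by (auto simp: single_valued_def tree_rel_def)

locale G =
  fixes V :: "'v set" and E M :: "'v set set" and fs :: "'v list"
  assumes gr: "graph V E" and ME: "M \<subseteq> E" and mt: "matching M"
    and dfs: "distinct fs" and sfs: "set fs = {v \<in> V. \<not> matched M v}"
begin

lemma edge_ne: "{u, v} \<in> M \<Longrightarrow> u \<noteq> v"
proof -
  assume "{u, v} \<in> M"
  then have "{u, v} \<in> E" using ME by blast
  then obtain a b where "{u, v} = {a, b}" "a \<noteq> b" using gr unfolding graph_def by blast
  then show ?thesis by (auto simp: doubleton_eq_iff)
qed

lemma uniq: "{u, v} \<in> M \<Longrightarrow> {u', v} \<in> M \<Longrightarrow> u = u'"
proof -
  assume a: "{u, v} \<in> M" "{u', v} \<in> M"
  have "{u,v} \<inter> {u',v} \<noteq> {}" by auto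
  hence "{u,v} = {u',v}" using mt a unfolding matching_def by meson
  with edge_ne[OF a(1)] show ?thesis by (auto simp: doubleton_eq_iff)
qed

lemma mate_in: "matched M v \<Longrightarrow> {mate M v, v} \<in> M"
proof -
  assume "matched M v"
  then obtain u where u: "{u, v} \<in> M" unfolding matched_def by blast
  have "mate M v = u" unfolding mate_def
    by (rule the_equality) (use u uniq in auto)
  then show ?thesis using u by simp
qed

lemma mate_eq: "{u, v} \<in> M \<Longrightarrow> mate M v = u"
  using mate_in uniq matched_def by metis

lemma mate_ne: "matched M v \<Longrightarrow> mate M v \<noteq> v"
  using mate_in edge_ne by metis

lemma mate_matched: "matched M v \<Longrightarrow> matched M (mate M v)"
  using mate_in unfolding matched_def by (metis insert_commute)

lemma mate_mate: "matched M v \<Longrightarrow> mate M (mate M v) = v"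
  using mate_in mate_eq by (metis insert_commute)

lemma mate_inj: "matched M v \<Longrightarrow> matched M w \<Longrightarrow> mate M v = mate M w \<Longrightarrow> v = w"
  using mate_mate by metis


end

definition bs :: "'v st \<Rightarrow> 'v \<Rightarrow> bool" where
  "bs s v \<longleftrightarrow> lab s v = Some Even \<and> bse s v = v"

definition node :: "'v st \<Rightarrow> 'v \<Rightarrow> 'v" where
  "node s w = (if lab s w = Some Odd then w else bse s w)"

definition sub :: "'v set set \<Rightarrow> 'v st \<Rightarrow> 'v \<Rightarrow> 'v set" where
  "sub M s v = {w. lab s w \<noteq> None \<and> (node s w, v) \<in> (tree_rel M s)\<^sup>*}"

fun fv :: "'v frame \<Rightarrow> 'v set" where
  "fv (Scan x R) = {x}" | "fv (Calls us) = set us"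

definition fvs :: "'v frame list \<Rightarrow> 'v set" where
  "fvs l = \<Union>(fv ` set l)"

definition callv :: "'v frame list \<Rightarrow> 'v set" where
  "callv l = \<Union>{set us | us. Calls us \<in> set l}"

fun SI :: "('v \<Rightarrow> bool) \<Rightarrow> ('v \<Rightarrow> 'v set) \<Rightarrow> 'v frame list \<Rightarrow> bool" where
  "SI b sb [] = True"
| "SI b sb (Scan v R # rs) = ((b v \<longrightarrow> fvs rs \<inter> sb v = {}) \<and> SI b sb rs)"
| "SI b sb (Calls us # rs) = SI b sb rs"

lemma fvs_simps[simp]: "fvs [] = {}" "fvs (fr # l) = fv fr \<union> fvs l"
  by (auto simp: fvs_def)

lemma callv_simps[simp]: "callv [] = {}" "callv (Scan x R # l) = callv l"
  "callv (Calls us # l) = set us \<union> callv l"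
  by (auto simp: callv_def)

lemma callv_fvs: "callv l \<subseteq> fvs l"
proof
  fix v assume "v \<in> callv l"
  then obtain us where "Calls us \<in> set l" "v \<in> set us" by (auto simp: callv_def)
  then show "v \<in> fvs l" unfolding fvs_def by (metis UN_iff fv.simps(2))
qed

lemma SI_mono:
  assumes "SI b sb l"
    and "\<And>v w. v \<in> fvs l \<Longrightarrow> b' v \<Longrightarrow> w \<in> fvs l \<Longrightarrow> w \<in> sb' v \<Longrightarrow> b v \<and> w \<in> sb v"
  shows "SI b' sb' l"
  using assms
proof (induction l)
  case Nil
  then show ?case by simp
next
  case (Cons fr l)
  have SIl: "SI b sb l" using Cons.prems(1) by (cases fr) auto
  have IH: "SI b' sb' l"
  proof (rule Cons.IH[OF SIl])
    fix v w assume "v \<in> fvs l" "b' v" "w \<in> fvs l" "w \<in> sb' v"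
    then show "b v \<and> w \<in> sb v" using Cons.prems(2)[of v w] by simp
  qed
  show ?case
  proof (cases fr)
    case (Scan v R)
    have "b' v \<Longrightarrow> fvs l \<inter> sb' v = {}"
    proof -
      assume "b' v"
      have "w \<notin> sb' v" if "w \<in> fvs l" for w
      proof
        assume "w \<in> sb' v"
        then have "b v \<and> w \<in> sb v" using Cons.prems(2)[of v w] that \<open>b' v\<close> Scan by simp
        then show False using Cons.prems(1) Scan that by auto
      qed
      then show ?thesis by auto
    qed
    then show ?thesis using IH Scan by simp
  next
    case (Calls us)
    then show ?thesis using IH by simp
  qed
qed

context G
begin

definition inv :: "'v st \<Rightarrow> bool" where
  "inv s \<longleftrightarrow>
    (\<forall>v. lab s v = Some Even \<longrightarrow> lab s (bse s v) = Some Even \<and> bse s (bse s v) = bse s v) \<and>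
    (\<forall>v. lab s v = Some Odd \<longrightarrow> lab s (par s v) = Some Even) \<and>
    (\<forall>v. lab s v = Some Odd \<longrightarrow> matched M v \<longrightarrow> bs s (mate M v)) \<and>
    (\<forall>v. bs s v \<longrightarrow> matched M v \<longrightarrow> lab s (mate M v) = Some Odd) \<and>
    (\<forall>v. lab s v \<noteq> None \<longrightarrow> matched M v \<longrightarrow> lab s (mate M v) \<noteq> None) \<and>
    (\<forall>v \<in> fvs (stk s). lab s v = Some Even) \<and>
    (\<forall>v \<in> callv (stk s). bse s v \<noteq> v) \<and>
    (\<forall>v \<in> scanned s. lab s v = Some Even) \<and>
    (\<exists>st::'v \<Rightarrow> nat. \<forall>c p. (c, p) \<in> tree_rel M s \<longrightarrow> st p < st c) \<and>
    distinct (rest s) \<and> set (rest s) \<subseteq> set fs \<and>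
    (\<forall>f \<in> set (rest s). lab s f \<noteq> None \<longrightarrow> (\<exists>p\<in>cp s. f = fst p \<or> f = snd p)) \<and>
    SI (bs s) (sub M s) (stk s) \<and>
    (\<forall>v \<in> scanned s. bs s v \<longrightarrow> fvs (stk s) \<inter> sub M s v = {})"

context
  fixes s assumes I: "inv s"
begin

lemma I1: "lab s v = Some Even \<Longrightarrow> lab s (bse s v) = Some Even \<and> bse s (bse s v) = bse s v"
  using I by (simp add: inv_def)
lemma I2: "lab s v = Some Odd \<Longrightarrow> lab s (par s v) = Some Even"
  using I by (simp add: inv_def)
lemma I3: "lab s v = Some Odd \<Longrightarrow> matched M v \<Longrightarrow> bs s (mate M v)"
  using I by (simp add: inv_def)
lemma I4: "bs s v \<Longrightarrow> matched M v \<Longrightarrow> lab s (mate M v) = Some Odd"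
  using I by (simp add: inv_def)
lemma I5: "lab s v \<noteq> None \<Longrightarrow> matched M v \<Longrightarrow> lab s (mate M v) \<noteq> None"
  using I by (simp add: inv_def)
lemma I6: "v \<in> fvs (stk s) \<Longrightarrow> lab s v = Some Even"
  using I by (simp add: inv_def)
lemma I7: "v \<in> callv (stk s) \<Longrightarrow> bse s v \<noteq> v"
  using I by (simp add: inv_def)
lemma I8: "v \<in> scanned s \<Longrightarrow> lab s v = Some Even"
  using I by (simp add: inv_def)
lemma I9: "\<exists>st::'v \<Rightarrow> nat. \<forall>c p. (c, p) \<in> tree_rel M s \<longrightarrow> st p < st c"
  using I by (simp add: inv_def)
lemma I10: "distinct (rest s)" "set (rest s) \<subseteq> set fs"
  "f \<in> set (rest s) \<Longrightarrow> lab s f \<noteq> None \<Longrightarrow> (\<exists>p\<in>cp s. f = fst p \<or> f = snd p)"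
  using I by (auto simp: inv_def)
lemma I11: "SI (bs s) (sub M s) (stk s)"
  using I by (simp add: inv_def)
lemma I12: "v \<in> scanned s \<Longrightarrow> bs s v \<Longrightarrow> fvs (stk s) \<inter> sub M s v = {}"
  using I by (simp add: inv_def)

lemma edge_cases:
  assumes "(c, p) \<in> tree_rel M s"
  shows "(lab s c = Some Odd \<and> p = bse s (par s c) \<and> bs s p) \<or>
         (bs s c \<and> matched M c \<and> p = mate M c \<and> lab s p = Some Odd)"
proof -
  have np: "node_parent M s c = Some p" using assms by (simp add: tree_rel_def)
  show ?thesis
  proof (cases "lab s c")
    case None then show ?thesis using np by (simp add: node_parent_def)
  next
    case (Some l)
    show ?thesis
    proof (cases l)
      case Odd
      then have "p = bse s (par s c)" using np Some by (simp add: node_parent_def)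
      moreover have "bs s p" using I1[OF I2] Odd Some \<open>p = _\<close> by (simp add: bs_def)
      ultimately show ?thesis using Odd Some by simp
    next
      case Even
      then have "bse s c = c \<and> matched M c \<and> p = mate M c" using np Some
        by (simp add: node_parent_def split: if_splits)
      then show ?thesis using Even Some I4 by (simp add: bs_def)
    qed
  qed
qed

lemma edge_lab: "(c, p) \<in> tree_rel M s \<Longrightarrow> lab s c \<noteq> None \<and> lab s p \<noteq> None"
  using edge_cases by (auto simp: bs_def)

lemma rtr_lab: "(a, b) \<in> (tree_rel M s)\<^sup>* \<Longrightarrow> lab s a \<noteq> None \<Longrightarrow> lab s b \<noteq> None"
  by (induction rule: rtrancl_induct) (auto dest: edge_lab)

lemma tr_lab: "(a, b) \<in> (tree_rel M s)\<^sup>+ \<Longrightarrow> lab s b \<noteq> None"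
  by (induction rule: trancl_induct) (auto dest: edge_lab)

lemma acyc: "(a, a) \<notin> (tree_rel M s)\<^sup>+"
proof
  assume "(a, a) \<in> (tree_rel M s)\<^sup>+"
  obtain st :: "'v \<Rightarrow> nat" where st: "\<And>c p. (c, p) \<in> tree_rel M s \<Longrightarrow> st p < st c"
    using I9 by blast
  have "\<And>x y. (x, y) \<in> (tree_rel M s)\<^sup>+ \<Longrightarrow> st y < st x"
  proof -
    fix x y assume "(x, y) \<in> (tree_rel M s)\<^sup>+"
    then show "st y < st x" by (induction rule: trancl_induct) (auto dest: st)
  qed
  with \<open>(a, a) \<in> _\<close> show False by blast
qed

lemma node_lab: "lab s w \<noteq> None \<Longrightarrow> lab s (node s w) \<noteq> None"
proof -
  assume "lab s w \<noteq> None"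
  then obtain a where a: "lab s w = Some a" by auto
  then show ?thesis using I1[of w] by (cases a) (auto simp: node_def)
qed

lemma edge_tgt: "(c, p) \<in> tree_rel M s \<Longrightarrow> lab s p = Some Odd \<or> bs s p"
  using edge_cases by blast

lemma edge_src: "(c, p) \<in> tree_rel M s \<Longrightarrow> lab s c = Some Odd \<or> bs s c"
  using edge_cases by blast

lemma rtr_node: "(a, b) \<in> (tree_rel M s)\<^sup>* \<Longrightarrow> lab s a = Some Odd \<or> bs s a \<Longrightarrow> lab s b = Some Odd \<or> bs s b"
  by (induction rule: rtrancl_induct) (auto dest: edge_tgt)

lemma conf: "(x, y) \<in> (tree_rel M s)\<^sup>* \<Longrightarrow> (x, z) \<in> (tree_rel M s)\<^sup>* \<Longrightarrow>
   (y, z) \<in> (tree_rel M s)\<^sup>* \<or> (z, y) \<in> (tree_rel M s)\<^sup>*"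
  by (rule single_valued_confluent[OF sv_tree_rel])

end
end

locale BL = G V E M fs for V :: "'v set" and E M :: "'v set set" and fs :: "'v list" +
  fixes s :: "'v st" and x :: 'v and R :: "'v set" and rs :: "'v frame list" and y :: 'v
    and us :: "'v list"
  assumes Is: "inv s" and stk: "stk s = Scan x R # rs" and ye: "lab s y = Some Even"
    and pd: "(bse s y, bse s x) \<in> (tree_rel M s)\<^sup>+"
    and us: "set us = {v. (bse s y, v) \<in> (tree_rel M s)\<^sup>* \<and> (v, bse s x) \<in> (tree_rel M s)\<^sup>* \<and> lab s v = Some Odd}"
begin

abbreviation T where "T \<equiv> tree_rel M s"

definition "B = bse s x"
definition "P = {n. (bse s y, n) \<in> T\<^sup>* \<and> (n, B) \<in> T\<^sup>*}"
definition "inB v \<longleftrightarrow> (v \<in> P \<and> lab s v = Some Odd) \<or> (lab s v = Some Even \<and> bse s v \<in> P)"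
definition "s' = s\<lparr>lab := \<lambda>v. if inB v then Some Even else lab s v,
                  bse := \<lambda>v. if inB v then B else bse s v,
                  stk := Calls us # Scan x (R - {y}) # rs\<rparr>"
definition "f n = (if n \<in> P then B else n)"

abbreviation T' where "T' \<equiv> tree_rel M s'"

lemma xe: "lab s x = Some Even"
  using I6[OF Is, of x] stk by simp

lemma Bbs: "bs s B"
  using I1[OF Is xe] by (simp add: bs_def B_def)

lemma BP: "B \<in> P"
  using pd by (simp add: P_def B_def)

lemma yP: "bse s y \<in> P"
  using pd by (simp add: P_def B_def)

lemma ybs: "bs s (bse s y)"
  using I1[OF Is ye] by (simp add: bs_def)

lemma P_node: "n \<in> P \<Longrightarrow> lab s n = Some Odd \<or> bs s n"
  unfolding P_def using rtr_node[OF Is] ybs by blast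

lemma P_lab: "n \<in> P \<Longrightarrow> lab s n \<noteq> None"
  using P_node by (auto simp: bs_def)

lemma P_up: assumes "c \<in> P" "c \<noteq> B" "(c, p) \<in> T" shows "p \<in> P"
proof -
  have cB: "(c, B) \<in> T\<^sup>*" and yc: "(bse s y, c) \<in> T\<^sup>*" using assms(1) by (auto simp: P_def)
  from cB assms(2) obtain p' where "(c, p') \<in> T" "(p', B) \<in> T\<^sup>*"
    by (metis converse_rtranclE)
  moreover have "p' = p" using sv_tree_rel[of M s] assms(3) \<open>(c, p') \<in> T\<close>
    unfolding single_valued_def by blast
  ultimately show ?thesis using yc assms(3) by (auto simp: P_def)
qed

lemma B_par: assumes "(B, p) \<in> T" shows "p \<notin> P"
proof
  assume "p \<in> P"
  then have "(p, B) \<in> T\<^sup>*" by (simp add: P_def)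
  with assms have "(B, B) \<in> T\<^sup>+" by auto
  then show False using acyc[OF Is] by blast
qed

lemma mate_notP:
  assumes "bs s v" "matched M v" "v \<notin> P" shows "mate M v \<notin> P"
proof
  assume mP: "mate M v \<in> P"
  have mo: "lab s (mate M v) = Some Odd" using I4[OF Is assms(1,2)] .
  have "mate M v \<noteq> bse s y" using ybs mo by (auto simp: bs_def)
  moreover have "(bse s y, mate M v) \<in> T\<^sup>*" using mP by (simp add: P_def)
  ultimately obtain c where yc: "(bse s y, c) \<in> T\<^sup>*" and cm: "(c, mate M v) \<in> T"
    by (metis rtranclE)
  have "(c, B) \<in> T\<^sup>*" using cm mP by (auto simp: P_def)
  then have cP: "c \<in> P" using yc by (simp add: P_def)
  from edge_cases[OF Is cm] show False
  proof
    assume "lab s c = Some Odd \<and> mate M v = bse s (par s c) \<and> bs s (mate M v)"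
    then show False using mo by (simp add: bs_def)
  next
    assume "bs s c \<and> matched M c \<and> mate M v = mate M c \<and> lab s (mate M v) = Some Odd"
    then have "c = v" using mate_inj assms(2) by metis
    then show False using cP assms(3) by simp
  qed
qed

lemma inB_iff: "inB v \<longleftrightarrow> lab s v \<noteq> None \<and> node s v \<in> P"
proof (cases "lab s v")
  case None then show ?thesis by (simp add: inB_def)
next
  case (Some a) then show ?thesis by (cases a) (auto simp: inB_def node_def)
qed

lemma lab': "lab s' v = (if inB v then Some Even else lab s v)"
  by (simp add: s'_def)
lemma bse': "bse s' v = (if inB v then B else bse s v)"
  by (simp add: s'_def)
lemma par': "par s' = par s"
  by (simp add: s'_def)
lemma other': "scanned s' = scanned s" "rest s' = rest s" "cp s' = cp s"
  "stk s' = Calls us # Scan x (R - {y}) # rs"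
  by (simp_all add: s'_def)

lemma inB_lab: "inB v \<Longrightarrow> lab s v \<noteq> None"
  by (simp add: inB_iff)

lemma labeled': "lab s' v \<noteq> None \<longleftrightarrow> lab s v \<noteq> None"
  using inB_lab by (auto simp: lab')

lemma even': "lab s v = Some Even \<Longrightarrow> lab s' v = Some Even"
  by (simp add: lab')

lemma BinB: "inB B"
  using Bbs BP by (simp add: inB_def bs_def)

lemma f_P: "n \<in> P \<Longrightarrow> f n = B" and f_nP: "n \<notin> P \<Longrightarrow> f n = n"
  by (simp_all add: f_def)

lemma fB: "f B = B"
  by (simp add: f_def)

lemma node': assumes "lab s w \<noteq> None" shows "node s' w = f (node s w)"
proof (cases "inB w")
  case True
  then have "node s w \<in> P" by (simp add: inB_iff)
  then show ?thesis using True by (simp add: node_def lab' bse' f_def)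
next
  case False
  then have "node s w \<notin> P" using assms by (simp add: inB_iff)
  then show ?thesis using False by (simp add: node_def lab' bse' f_def)
qed

lemma np': "node_parent M s' c = (if c \<in> P \<and> c \<noteq> B then None else map_option f (node_parent M s c))"
proof (cases "c \<in> P \<and> c \<noteq> B")
  case True
  then have "inB c" using P_node[of c] by (auto simp: inB_def bs_def)
  moreover have "c \<noteq> B" using True by simp
  ultimately show ?thesis using True by (auto simp: node_parent_def lab' bse')
next
  case False
  show ?thesis
  proof (cases "c = B")
    case True
    have "inB B" by (rule BinB)
    have bsB: "lab s B = Some Even" "bse s B = B" using Bbs by (auto simp: bs_def)
    have "matched M B \<Longrightarrow> f (mate M B) = mate M B"
    proof -
      assume "matched M B"
      then have "(B, mate M B) \<in> T" using bsB by (simp add: tree_rel_def node_parent_def)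
      then show ?thesis using B_par f_nP by blast
    qed
    then show ?thesis using True \<open>inB B\<close> bsB BP by (simp add: node_parent_def lab' bse')
  next
    case False
    with \<open>\<not> (c \<in> P \<and> c \<noteq> B)\<close> have cP: "c \<notin> P" by blast
    show ?thesis
    proof (cases "lab s c")
      case None
      then have "\<not> inB c" using inB_lab by blast
      then show ?thesis using None cP by (simp add: node_parent_def lab')
    next
      case (Some a)
      show ?thesis
      proof (cases a)
        case Odd
        then have ni: "\<not> inB c" using Some cP by (simp add: inB_def)
        have pe: "lab s (par s c) = Some Even" using I2[OF Is] Some Odd by simp
        have "bse s' (par s c) = f (bse s (par s c))"
          using pe by (simp add: bse' inB_def f_def)
        then show ?thesis using ni Some Odd cP by (simp add: node_parent_def lab' par')
      next
        case Even
        show ?thesis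
        proof (cases "bse s c \<in> P")
          case True
          then have "inB c" "bse s c \<noteq> c" using Some Even cP by (auto simp: inB_def)
          moreover have "B \<noteq> c" using BP cP by blast
          ultimately show ?thesis using Some Even cP by (simp add: node_parent_def lab' bse')
        next
          case False
          then have ni: "\<not> inB c" using Some Even by (simp add: inB_def)
          have "bse s c = c \<Longrightarrow> matched M c \<Longrightarrow> f (mate M c) = mate M c"
            using mate_notP[of c] Some Even cP f_nP by (simp add: bs_def)
          then show ?thesis using ni Some Even cP by (simp add: node_parent_def lab' bse')
        qed
      qed
    qed
  qed
qed

lemma T'_iff: "(c, p') \<in> T' \<longleftrightarrow> (c \<notin> P \<or> c = B) \<and> (\<exists>p. (c, p) \<in> T \<and> p' = f p)"
  by (auto simp: tree_rel_def np')

lemma L1: "(a, c) \<in> T\<^sup>* \<Longrightarrow> (f a, f c) \<in> T'\<^sup>*"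
proof (induction rule: rtrancl_induct)
  case base then show ?case by simp
next
  case (step c d)
  show ?case
  proof (cases "c \<in> P \<and> c \<noteq> B")
    case True
    then have "d \<in> P" using P_up step(2) by blast
    then have "f d = f c" using True by (simp add: f_def)
    then show ?thesis using step(3) by simp
  next
    case False
    then have "(c, f d) \<in> T'" using step(2) by (auto simp: T'_iff)
    moreover have "f c = c" using False fB f_nP by blast
    ultimately show ?thesis using step(3) by simp
  qed
qed

lemma L2: "(c', v) \<in> T'\<^sup>* \<Longrightarrow> f a = c' \<Longrightarrow> \<exists>u. f u = v \<and> (a, u) \<in> T\<^sup>*"
proof (induction arbitrary: a rule: converse_rtrancl_induct)
  case base then show ?case by blast
next
  case (step c' p')
  from step(1) obtain p where cp: "(c' \<notin> P \<or> c' = B)" "(c', p) \<in> T" "p' = f p"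
    by (auto simp: T'_iff)
  obtain u where u: "f u = v" "(p, u) \<in> T\<^sup>*" using step(3)[of p] cp(3) by blast
  show ?case
  proof (cases "a \<in> P")
    case False
    then have "a = c'" using step(4) by (simp add: f_def)
    have "(c', u) \<in> T\<^sup>*" using cp(2) u(2) by (rule converse_rtrancl_into_rtrancl)
    then show ?thesis using u(1) \<open>a = c'\<close> by blast
  next
    case True
    then have "c' = B" using step(4) by (simp add: f_def)
    moreover have "(a, B) \<in> T\<^sup>*" using True by (simp add: P_def)
    moreover have "(c', u) \<in> T\<^sup>*" using cp(2) u(2) by (rule converse_rtrancl_into_rtrancl)
    ultimately have "(a, u) \<in> T\<^sup>*" by simp
    then show ?thesis using u(1) by blast
  qed
qed

lemma sub_eq: assumes "v \<notin> P \<or> v = B" shows "sub M s' v = sub M s v"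
proof (intro set_eqI iffI)
  fix w assume "w \<in> sub M s' v"
  then have wl': "lab s' w \<noteq> None" and p: "(node s' w, v) \<in> T'\<^sup>*"
    by (auto simp: sub_def)
  then have wl: "lab s w \<noteq> None" using labeled' by blast
  obtain u where u: "f u = v" "(node s w, u) \<in> T\<^sup>*" using L2[OF p] node'[OF wl] by metis
  have "(u, v) \<in> T\<^sup>*"
  proof (cases "u \<in> P")
    case True
    then have "v = B" using u(1) assms by (simp add: f_def)
    then show ?thesis using True by (simp add: P_def)
  next
    case False then show ?thesis using u(1) by (simp add: f_def)
  qed
  then show "w \<in> sub M s v" using wl u(2) by (auto simp: sub_def)
next
  fix w assume "w \<in> sub M s v"
  then have wl: "lab s w \<noteq> None" and p: "(node s w, v) \<in> T\<^sup>*"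
    by (auto simp: sub_def)
  have "f v = v" using assms fB f_nP by blast
  moreover have "lab s' w \<noteq> None" using wl labeled' by blast
  ultimately show "w \<in> sub M s' v" using L1[OF p] node'[OF wl] by (simp add: sub_def)
qed

lemma bs'_cases: "bs s' v \<Longrightarrow> v = B \<or> (bs s v \<and> v \<notin> P)"
  by (auto simp: bs_def lab' bse' inB_def split: if_splits)


lemma us_P: "u \<in> set us \<Longrightarrow> u \<in> P \<and> lab s u = Some Odd"
  using us by (simp add: P_def B_def)

lemma us_inB: "u \<in> set us \<Longrightarrow> inB u"
  using us_P by (simp add: inB_def)

lemma nodex: "node s x = B"
  using xe by (simp add: node_def B_def)

lemma x_sub: "(B, v) \<in> T\<^sup>* \<Longrightarrow> x \<in> sub M s v"
  using xe nodex by (simp add: sub_def)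

lemma fvs_stk: "fvs (stk s) = {x} \<union> fvs rs"
  using stk by simp

lemma fvs_stk': "fvs (stk s') = set us \<union> fvs (stk s)"
  using stk by (auto simp: other')

lemma callv_stk': "callv (stk s') = set us \<union> callv (stk s)"
  using stk by (simp add: other')

lemma st_rtr:
  assumes st: "\<And>c p. (c, p) \<in> T \<Longrightarrow> (st p :: nat) < st c"
  shows "(a, b) \<in> T\<^sup>* \<Longrightarrow> st b \<le> st a"
  by (induction rule: rtrancl_induct) (auto dest: st)

lemma inv': "inv s'"
proof -
  have C1: "lab s' (bse s' v) = Some Even \<and> bse s' (bse s' v) = bse s' v"
    if "lab s' v = Some Even" for v
  proof (cases "inB v")
    case True
    then show ?thesis using BinB by (simp add: lab' bse')
  next
    case False
    then have le: "lab s v = Some Even" using that by (simp add: lab')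
    define c where "c = bse s v"
    have c: "lab s c = Some Even" "bse s c = c" using I1[OF Is le] by (auto simp: c_def)
    have "c \<notin> P" using False le by (simp add: inB_def c_def)
    then have "\<not> inB c" using c by (simp add: inB_def)
    then show ?thesis using False c by (simp add: lab' bse' c_def)
  qed
  have C2: "lab s' (par s' v) = Some Even" if "lab s' v = Some Odd" for v
  proof -
    have "lab s v = Some Odd" using that by (simp add: lab' split: if_splits)
    then show ?thesis using I2[OF Is] even' by (simp add: par')
  qed
  have C3: "bs s' (mate M v)" if "lab s' v = Some Odd" "matched M v" for v
  proof -
    have ni: "\<not> inB v" using that by (auto simp: lab')
    have vo: "lab s v = Some Odd" using that ni by (simp add: lab')
    have vP: "v \<notin> P" using ni vo by (simp add: inB_def)
    define m where "m = mate M v"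
    have bm: "bs s m" using I3[OF Is vo that(2)] by (simp add: m_def)
    have mm: "matched M m" "mate M m = v" using mate_matched mate_mate that(2) by (auto simp: m_def)
    have mv: "(m, v) \<in> T" using bm mm by (simp add: tree_rel_def node_parent_def bs_def)
    show ?thesis
    proof (cases "m \<in> P")
      case True
      then have "m = B" using P_up mv vP by blast
      then show ?thesis using BinB by (simp add: bs_def lab' bse' m_def)
    next
      case False
      then have "\<not> inB m" using bm by (simp add: inB_def bs_def)
      then show ?thesis using bm by (simp add: bs_def lab' bse' m_def)
    qed
  qed
  have C4: "lab s' (mate M v) = Some Odd" if "bs s' v" "matched M v" for v
  proof -
    have "mate M v \<notin> P \<and> lab s (mate M v) = Some Odd"
    proof (cases "v = B")
      case True
      have "(B, mate M B) \<in> T" using Bbs that(2) True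
        by (simp add: tree_rel_def node_parent_def bs_def)
      then show ?thesis using B_par I4[OF Is Bbs] that(2) True by simp
    next
      case False
      then have "bs s v" "v \<notin> P" using bs'_cases[OF that(1)] by auto
      then show ?thesis using mate_notP I4[OF Is] that(2) by blast
    qed
    then have "\<not> inB (mate M v)" by (simp add: inB_def)
    then show ?thesis using \<open>_ \<and> lab s (mate M v) = Some Odd\<close> by (simp add: lab')
  qed
  have C5: "lab s' (mate M v) \<noteq> None" if "lab s' v \<noteq> None" "matched M v" for v
    using I5[OF Is] that labeled' by blast
  have C6: "lab s' v = Some Even" if "v \<in> fvs (stk s')" for v
  proof -
    have "v \<in> set us \<or> v \<in> fvs (stk s)" using that fvs_stk' by blast
    then show ?thesis using us_inB I6[OF Is] even' by (auto simp: lab')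
  qed
  have C7: "bse s' v \<noteq> v" if "v \<in> callv (stk s')" for v
  proof -
    have "v \<in> set us \<or> v \<in> callv (stk s)" using that callv_stk' by blast
    then show ?thesis
    proof
      assume "v \<in> set us"
      then have "inB v" "lab s v = Some Odd" using us_inB us_P by auto
      moreover have "lab s B = Some Even" using Bbs by (simp add: bs_def)
      ultimately show ?thesis by (auto simp: bse')
    next
      assume a: "v \<in> callv (stk s)"
      then have "bse s v \<noteq> v" using I7[OF Is] by blast
      moreover have "bse s B = B" using Bbs by (simp add: bs_def)
      ultimately show ?thesis by (auto simp: bse')
    qed
  qed
  have C8: "lab s' v = Some Even" if "v \<in> scanned s'" for v
    using that I8[OF Is] even' by (simp add: other')
  have C9: "\<exists>st::'v \<Rightarrow> nat. \<forall>c p. (c, p) \<in> T' \<longrightarrow> st p < st c"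
  proof -
    obtain st :: "'v \<Rightarrow> nat" where st: "\<And>c p. (c, p) \<in> T \<Longrightarrow> st p < st c"
      using I9[OF Is] by blast
    have "st p' < st c" if e: "(c, p') \<in> T'" for c p'
    proof -
      obtain p where p: "(c, p) \<in> T" "p' = f p" using e by (auto simp: T'_iff)
      show ?thesis
      proof (cases "p \<in> P")
        case True
        then have "(p, B) \<in> T\<^sup>*" by (simp add: P_def)
        then have "st B \<le> st p" using st_rtr[of st, OF st] by blast
        then show ?thesis using st[OF p(1)] p(2) True by (simp add: f_def)
      next
        case False then show ?thesis using st[OF p(1)] p(2) by (simp add: f_def)
      qed
    qed
    then show ?thesis by blast
  qed
  have C10: "distinct (rest s')" "set (rest s') \<subseteq> set fs"
    "\<forall>g \<in> set (rest s'). lab s' g \<noteq> None \<longrightarrow> (\<exists>p\<in>cp s'. g = fst p \<or> g = snd p)"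
    using I10[OF Is] labeled' by (auto simp: other')
  have C11: "SI (bs s') (sub M s') (stk s')"
  proof -
    have "SI (bs s) (sub M s) (Scan x (R - {y}) # rs)" using I11[OF Is] stk by simp
    then have "SI (bs s') (sub M s') (Scan x (R - {y}) # rs)"
    proof (rule SI_mono)
      fix v w assume "bs s' v" "w \<in> sub M s' v"
      then show "bs s v \<and> w \<in> sub M s v" using bs'_cases Bbs sub_eq by metis
    qed
    then show ?thesis by (simp add: other')
  qed
  have C12: "fvs (stk s') \<inter> sub M s' v = {}" if "v \<in> scanned s'" "bs s' v" for v
  proof -
    have vs: "v \<in> scanned s" using that by (simp add: other')
    have "v \<noteq> B"
    proof
      assume "v = B"
      then have "x \<in> sub M s v" using x_sub by simp
      moreover have "x \<in> fvs (stk s)" using fvs_stk by simp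
      ultimately show False using I12[OF Is vs] Bbs \<open>v = B\<close> by blast
    qed
    then have bv: "bs s v" "v \<notin> P" using bs'_cases[OF that(2)] by auto
    then have se: "sub M s' v = sub M s v" using sub_eq by simp
    have old: "fvs (stk s) \<inter> sub M s v = {}" using I12[OF Is vs bv(1)] .
    have "u \<notin> sub M s v" if u: "u \<in> set us" for u
    proof
      assume "u \<in> sub M s v"
      then have uv: "(u, v) \<in> T\<^sup>*" using us_P[OF u] by (simp add: sub_def node_def)
      have uB: "(u, B) \<in> T\<^sup>*" and yu: "(bse s y, u) \<in> T\<^sup>*" using us_P[OF u] by (auto simp: P_def)
      from conf[OF Is uv uB] show False
      proof
        assume "(v, B) \<in> T\<^sup>*"
        then have "v \<in> P" using yu uv by (auto simp: P_def)
        then show False using bv by simp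
      next
        assume "(B, v) \<in> T\<^sup>*"
        then have "x \<in> sub M s v" by (rule x_sub)
        then show False using old fvs_stk by blast
      qed
    qed
    then show ?thesis using se old fvs_stk' by blast
  qed
  show ?thesis unfolding inv_def
    using C1 C2 C3 C4 C5 C6 C7 C8 C9 C10 C11 C12 by blast
qed

end

locale GR = G V E M fs for V :: "'v set" and E M :: "'v set set" and fs :: "'v list" +
  fixes s :: "'v st" and x :: 'v and R :: "'v set" and rs :: "'v frame list" and y :: 'v
  assumes Is: "inv s" and stk: "stk s = Scan x R # rs" and yn: "lab s y = None"
    and ym: "matched M y"
begin

abbreviation T where "T \<equiv> tree_rel M s"
definition "y' = mate M y"
definition "s' = s\<lparr>lab := (lab s)(y := Some Odd, y' := Some Even), par := (par s)(y := x),
   bse := (bse s)(y' := y'), stk := Scan y' (nm_nbrs E M y') # Scan x (R - {y}) # rs\<rparr>"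
abbreviation T' where "T' \<equiv> tree_rel M s'"

lemma yy: "y' \<noteq> y"
  using mate_ne[OF ym] by (simp add: y'_def)

lemma y'm: "matched M y'" "mate M y' = y"
  using mate_matched[OF ym] mate_mate[OF ym] by (auto simp: y'_def)

lemma y'n: "lab s y' = None"
proof (rule ccontr)
  assume "lab s y' \<noteq> None"
  then have "lab s (mate M y') \<noteq> None" using I5[OF Is] y'm(1) by blast
  then show False using y'm(2) yn by simp
qed

lemma xe: "lab s x = Some Even"
  using I6[OF Is, of x] stk by simp

lemma old_ne: "lab s v \<noteq> None \<Longrightarrow> v \<noteq> y \<and> v \<noteq> y'"
  using yn y'n by auto

lemma bxl: "lab s (bse s x) = Some Even"
  using I1[OF Is xe] by simp

lemma lab'_old: "lab s v \<noteq> None \<Longrightarrow> lab s' v = lab s v"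
  using old_ne by (simp add: s'_def)
lemma bse'_old: "v \<noteq> y' \<Longrightarrow> bse s' v = bse s v"
  by (simp add: s'_def)
lemma lab'_y: "lab s' y = Some Odd" and lab'_y': "lab s' y' = Some Even"
  using yy by (auto simp: s'_def)
lemma lab'_new: "lab s v = None \<Longrightarrow> v \<noteq> y \<Longrightarrow> v \<noteq> y' \<Longrightarrow> lab s' v = None"
  by (simp add: s'_def)
lemma bse'_y': "bse s' y' = y'"
  by (simp add: s'_def)
lemma par'_old: "v \<noteq> y \<Longrightarrow> par s' v = par s v"
  by (simp add: s'_def)
lemma par'_y: "par s' y = x"
  by (simp add: s'_def)
lemma other': "scanned s' = scanned s" "rest s' = rest s" "cp s' = cp s"
  "stk s' = Scan y' (nm_nbrs E M y') # Scan x (R - {y}) # rs"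
  by (simp_all add: s'_def)

lemma np'_old: assumes "lab s c \<noteq> None" shows "node_parent M s' c = node_parent M s c"
proof -
  have c: "c \<noteq> y" "c \<noteq> y'" using old_ne assms by auto
  show ?thesis
  proof (cases "lab s c = Some Odd")
    case True
    have "lab s (par s c) = Some Even" using I2[OF Is True] .
    then have "par s c \<noteq> y'" using y'n by auto
    then show ?thesis using True c by (simp add: node_parent_def s'_def)
  next
    case False
    obtain a where a: "lab s c = Some a" using assms by blast
    then have "lab s c = Some Even" using False by (cases a) auto
    then show ?thesis using c by (simp add: node_parent_def s'_def)
  qed
qed

lemma np'_y: "node_parent M s' y = Some (bse s x)"
proof -
  have "x \<noteq> y'" using xe y'n by auto
  then show ?thesis using yy by (simp add: node_parent_def s'_def)
qed

lemma np'_y': "node_parent M s' y' = Some y"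
  using yy y'm by (simp add: node_parent_def s'_def)

lemma np'_new: "lab s c = None \<Longrightarrow> c \<noteq> y \<Longrightarrow> c \<noteq> y' \<Longrightarrow> node_parent M s' c = None"
  by (simp add: node_parent_def s'_def)

lemma T'_iff: "(c, p) \<in> T' \<longleftrightarrow> (c, p) \<in> T \<or> (c = y \<and> p = bse s x) \<or> (c = y' \<and> p = y)"
proof (cases "lab s c = None")
  case True
  then have nT: "(c, p) \<notin> T" using edge_lab[OF Is] by blast
  consider "c = y" | "c = y'" | "c \<noteq> y \<and> c \<noteq> y'" by blast
  then show ?thesis
  proof cases
    case 1 then show ?thesis using nT np'_y yy by (auto simp: tree_rel_def)
  next
    case 2 then show ?thesis using nT np'_y' yy by (auto simp: tree_rel_def)
  next
    case 3 then show ?thesis using nT np'_new[OF True] by (auto simp: tree_rel_def)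
  qed
next
  case False
  then show ?thesis using np'_old old_ne by (auto simp: tree_rel_def)
qed

lemma T_T': "T \<subseteq> T'"
  by (auto simp: T'_iff)

lemma old_path: "(a, v) \<in> T'\<^sup>* \<Longrightarrow> lab s a \<noteq> None \<Longrightarrow> (a, v) \<in> T\<^sup>*"
proof (induction rule: rtrancl_induct)
  case base then show ?case by simp
next
  case (step v w)
  then have "(a, v) \<in> T\<^sup>*" by simp
  then have "lab s v \<noteq> None" using rtr_lab[OF Is] step(4) by blast
  then have "(v, w) \<in> T" using step(2) old_ne T'_iff by blast
  then show ?case using \<open>(a, v) \<in> T\<^sup>*\<close> by simp
qed

lemma node'_old: "lab s w \<noteq> None \<Longrightarrow> node s' w = node s w"
proof -
  assume a: "lab s w \<noteq> None"
  then have "w \<noteq> y'" using old_ne by blast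
  then show ?thesis using a lab'_old bse'_old by (simp add: node_def)
qed

lemma node'_y: "node s' y = y" and node'_y': "node s' y' = y'"
  using lab'_y lab'_y' bse'_y' by (auto simp: node_def)

lemma path_y: assumes "lab s v \<noteq> None" shows "(y, v) \<in> T'\<^sup>* \<longleftrightarrow> (bse s x, v) \<in> T\<^sup>*"
proof
  assume "(y, v) \<in> T'\<^sup>*"
  moreover have "y \<noteq> v" using assms old_ne by blast
  ultimately obtain c where "(y, c) \<in> T'" "(c, v) \<in> T'\<^sup>*" by (metis converse_rtranclE)
  moreover have "c = bse s x" using calculation(1) T'_iff yy edge_lab[OF Is] yn by blast
  ultimately show "(bse s x, v) \<in> T\<^sup>*" using old_path bxl by auto
next
  assume "(bse s x, v) \<in> T\<^sup>*"
  then have "(bse s x, v) \<in> T'\<^sup>*" using rtrancl_mono[OF T_T'] by blast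
  moreover have "(y, bse s x) \<in> T'" using T'_iff by blast
  ultimately show "(y, v) \<in> T'\<^sup>*" by (meson converse_rtrancl_into_rtrancl)
qed

lemma path_y': assumes "lab s v \<noteq> None" shows "(y', v) \<in> T'\<^sup>* \<longleftrightarrow> (bse s x, v) \<in> T\<^sup>*"
proof
  assume "(y', v) \<in> T'\<^sup>*"
  moreover have "y' \<noteq> v" using assms old_ne by blast
  ultimately obtain c where "(y', c) \<in> T'" "(c, v) \<in> T'\<^sup>*" by (metis converse_rtranclE)
  moreover have "c = y" using calculation(1) T'_iff yy edge_lab[OF Is] y'n by blast
  ultimately show "(bse s x, v) \<in> T\<^sup>*" using path_y assms by blast
next
  assume "(bse s x, v) \<in> T\<^sup>*"
  then have "(y, v) \<in> T'\<^sup>*" using path_y assms by blast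
  moreover have "(y', y) \<in> T'" using T'_iff by blast
  ultimately show "(y', v) \<in> T'\<^sup>*" by (meson converse_rtrancl_into_rtrancl)
qed

lemma sub'_old: assumes "lab s v \<noteq> None"
  shows "w \<in> sub M s' v \<longleftrightarrow> w \<in> sub M s v \<or> ((w = y \<or> w = y') \<and> (bse s x, v) \<in> T\<^sup>*)"
proof (cases "lab s w = None")
  case False
  have "(node s w, v) \<in> T'\<^sup>* \<longleftrightarrow> (node s w, v) \<in> T\<^sup>*"
    using old_path node_lab[OF Is False] rtrancl_mono[OF T_T'] by blast
  then show ?thesis using False node'_old lab'_old old_ne by (auto simp: sub_def)
next
  case True
  show ?thesis
  proof (cases "w = y \<or> w = y'")
    case True
    then show ?thesis using path_y[OF assms] path_y'[OF assms] node'_y node'_y' lab'_y lab'_y' yn y'n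
      by (auto simp: sub_def)
  next
    case False
    then show ?thesis using True lab'_new by (simp add: sub_def)
  qed
qed

lemma bs'_old: "lab s v \<noteq> None \<Longrightarrow> bs s' v \<longleftrightarrow> bs s v"
  using lab'_old bse'_old old_ne by (simp add: bs_def)

lemma fvs_stk': "fvs (stk s') = {y'} \<union> fvs (stk s)"
  using stk by (auto simp: other')

lemma inv': "inv s'"
proof -
  have C1: "lab s' (bse s' v) = Some Even \<and> bse s' (bse s' v) = bse s' v"
    if e: "lab s' v = Some Even" for v
  proof (cases "lab s v = None")
    case True
    have "v = y'"
    proof (rule ccontr)
      assume "v \<noteq> y'"
      moreover have "v \<noteq> y" using e lab'_y by auto
      ultimately have "lab s' v = None" using lab'_new[OF True] by blast
      then show False using e by simp
    qed
    then show ?thesis using lab'_y' bse'_y' by simp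
  next
    case False
    then have le: "lab s v = Some Even" using e lab'_old[OF False] by simp
    have b1: "lab s (bse s v) = Some Even" and b2: "bse s (bse s v) = bse s v" using I1[OF Is le] by auto
    have b3: "bse s v \<noteq> y'" using b1 y'n by auto
    have b4: "v \<noteq> y'" using False y'n by auto
    have "lab s' (bse s' v) = Some Even" using b1 lab'_old[of "bse s v"] bse'_old[OF b4] by simp
    moreover have "bse s' (bse s' v) = bse s' v" using b2 bse'_old[OF b4] bse'_old[OF b3] by simp
    ultimately show ?thesis by blast
  qed
  have C2: "lab s' (par s' v) = Some Even" if o: "lab s' v = Some Odd" for v
  proof (cases "lab s v = None")
    case True
    have "v = y"
    proof (rule ccontr)
      assume "v \<noteq> y"
      moreover have "v \<noteq> y'" using o lab'_y' by auto
      ultimately have "lab s' v = None" using lab'_new[OF True] by blast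
      then show False using o by simp
    qed
    then show ?thesis using par'_y lab'_old[of x] xe by simp
  next
    case False
    then have lo: "lab s v = Some Odd" using o lab'_old[OF False] by simp
    have pe: "lab s (par s v) = Some Even" using I2[OF Is lo] .
    have vy: "v \<noteq> y" using False yn by auto
    show ?thesis using par'_old[OF vy] lab'_old[of "par s v"] pe by simp
  qed
  have C3: "bs s' (mate M v)" if o: "lab s' v = Some Odd" and m: "matched M v" for v
  proof (cases "lab s v = None")
    case True
    have "v = y"
    proof (rule ccontr)
      assume "v \<noteq> y"
      moreover have "v \<noteq> y'" using o lab'_y' by auto
      ultimately have "lab s' v = None" using lab'_new[OF True] by blast
      then show False using o by simp
    qed
    then have "mate M v = y'" by (simp add: y'_def)
    then show ?thesis using lab'_y' bse'_y' by (simp add: bs_def)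
  next
    case False
    then have lo: "lab s v = Some Odd" using o lab'_old[OF False] by simp
    then have b: "bs s (mate M v)" using I3[OF Is lo m] by blast
    then have "lab s (mate M v) \<noteq> None" by (simp add: bs_def)
    then show ?thesis using bs'_old[of "mate M v"] b by blast
  qed
  have C4: "lab s' (mate M v) = Some Odd" if b: "bs s' v" and m: "matched M v" for v
  proof (cases "lab s v = None")
    case True
    have le: "lab s' v = Some Even" using b by (simp add: bs_def)
    have "v = y'"
    proof (rule ccontr)
      assume "v \<noteq> y'"
      moreover have "v \<noteq> y" using le lab'_y by auto
      ultimately have "lab s' v = None" using lab'_new[OF True] by blast
      then show False using le by simp
    qed
    then show ?thesis using lab'_y y'm by simp
  next
    case False
    then have "bs s v" using b bs'_old[OF False] by blast
    then have lo: "lab s (mate M v) = Some Odd" using I4[OF Is] m by blast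
    then show ?thesis using lab'_old[of "mate M v"] by simp
  qed
  have C5: "lab s' (mate M v) \<noteq> None" if l: "lab s' v \<noteq> None" and m: "matched M v" for v
  proof (cases "lab s v = None")
    case True
    have "v = y \<or> v = y'"
    proof (rule ccontr)
      assume "\<not> (v = y \<or> v = y')"
      then have "lab s' v = None" using lab'_new[OF True] by blast
      then show False using l by simp
    qed
    then show ?thesis
    proof
      assume "v = y"
      then show ?thesis using lab'_y' by (simp add: y'_def[symmetric])
    next
      assume "v = y'"
      then show ?thesis using lab'_y y'm by simp
    qed
  next
    case False
    then have lo: "lab s (mate M v) \<noteq> None" using I5[OF Is] m by blast
    then show ?thesis using lab'_old[OF lo] by simp
  qed
  have C6: "lab s' v = Some Even" if "v \<in> fvs (stk s')" for v
  proof -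
    have "v = y' \<or> v \<in> fvs (stk s)" using that fvs_stk' by blast
    then show ?thesis
    proof
      assume "v \<in> fvs (stk s)"
      then have "lab s v = Some Even" using I6[OF Is] by blast
      then show ?thesis using lab'_old[of v] by simp
    qed (use lab'_y' in simp)
  qed
  have C7: "bse s' v \<noteq> v" if "v \<in> callv (stk s')" for v
  proof -
    have "v \<in> callv (stk s)" using that stk by (simp add: other')
    moreover have "v \<in> fvs (stk s)" using calculation callv_fvs[of "stk s"] by blast
    moreover have "v \<noteq> y'" using calculation(2) I6[OF Is] y'n by (metis option.distinct(1))
    ultimately show ?thesis using I7[OF Is] bse'_old by simp
  qed
  have C8: "lab s' v = Some Even" if "v \<in> scanned s'" for v
    using that I8[OF Is] lab'_old by (simp add: other')
  have C9: "\<exists>st::'v \<Rightarrow> nat. \<forall>c p. (c, p) \<in> T' \<longrightarrow> st p < st c"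
  proof -
    obtain st :: "'v \<Rightarrow> nat" where st: "\<And>c p. (c, p) \<in> T \<Longrightarrow> st p < st c"
      using I9[OF Is] by blast
    define st' where "st' = st(y := st (bse s x) + 1, y' := st (bse s x) + 2)"
    have "st' p < st' c" if e: "(c, p) \<in> T'" for c p
    proof -
      have bx: "bse s x \<noteq> y" "bse s x \<noteq> y'" using bxl old_ne by auto
      from e T'_iff consider "(c, p) \<in> T" | "c = y \<and> p = bse s x" | "c = y' \<and> p = y" by blast
      then show ?thesis
      proof cases
        case 1
        then have "c \<noteq> y \<and> c \<noteq> y'" "p \<noteq> y \<and> p \<noteq> y'" using edge_lab[OF Is] old_ne by blast+
        then show ?thesis using st[OF 1] by (simp add: st'_def)
      next
        case 2 then show ?thesis using bx yy by (simp add: st'_def)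
      next
        case 3 then show ?thesis using yy by (simp add: st'_def)
      qed
    qed
    then show ?thesis by blast
  qed
  have C10: "distinct (rest s')" "set (rest s') \<subseteq> set fs"
    "\<forall>g \<in> set (rest s'). lab s' g \<noteq> None \<longrightarrow> (\<exists>p\<in>cp s'. g = fst p \<or> g = snd p)"
  proof -
    have "g \<noteq> y \<and> g \<noteq> y'" if "g \<in> set (rest s)" for g
      using that I10(2)[OF Is] sfs ym y'm by auto
    then show "distinct (rest s')" "set (rest s') \<subseteq> set fs"
      "\<forall>g \<in> set (rest s'). lab s' g \<noteq> None \<longrightarrow> (\<exists>p\<in>cp s'. g = fst p \<or> g = snd p)"
      using I10[OF Is] by (auto simp: other' s'_def)
  qed
  have C11: "SI (bs s') (sub M s') (stk s')"
  proof -
    have "SI (bs s) (sub M s) (Scan x (R - {y}) # rs)" using I11[OF Is] stk by simp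
    then have A: "SI (bs s') (sub M s') (Scan x (R - {y}) # rs)"
    proof (rule SI_mono)
      fix v w assume "v \<in> fvs (Scan x (R - {y}) # rs)" "bs s' v"
        "w \<in> fvs (Scan x (R - {y}) # rs)" "w \<in> sub M s' v"
      moreover have "lab s v \<noteq> None" "lab s w \<noteq> None"
        using calculation(1,3) stk I6[OF Is] by auto
      ultimately have "bs s v" "w \<noteq> y" "w \<noteq> y'" using bs'_old old_ne by blast+
      moreover have "w \<in> sub M s v"
        using sub'_old[OF \<open>lab s v \<noteq> None\<close>, of w] calculation \<open>w \<in> sub M s' v\<close> by simp
      ultimately show "bs s v \<and> w \<in> sub M s v" by blast
    qed
    have "w \<notin> sub M s' y'" if w: "w \<in> fvs (Scan x (R - {y}) # rs)" for w
    proof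
      assume ws: "w \<in> sub M s' y'"
      have wl: "lab s w \<noteq> None" using w stk I6[OF Is] by auto
      then have "(node s w, y') \<in> T'\<^sup>*" using ws node'_old by (simp add: sub_def)
      then have "(node s w, y') \<in> T\<^sup>*" using old_path node_lab[OF Is wl] by blast
      then have "lab s y' \<noteq> None" using rtr_lab[OF Is] node_lab[OF Is wl] by blast
      then show False using y'n by simp
    qed
    then show ?thesis using A by (auto simp: other')
  qed
  have C12: "fvs (stk s') \<inter> sub M s' v = {}" if vs: "v \<in> scanned s'" and b: "bs s' v" for v
  proof -
    have vs': "v \<in> scanned s" using vs by (simp add: other')
    have vl: "lab s v \<noteq> None" using I8[OF Is vs'] by simp
    have bv: "bs s v" using b bs'_old vl by blast
    have old: "fvs (stk s) \<inter> sub M s v = {}" using I12[OF Is vs' bv] .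
    have "(bse s x, v) \<notin> T\<^sup>*"
    proof
      assume "(bse s x, v) \<in> T\<^sup>*"
      then have "x \<in> sub M s v" using xe by (simp add: sub_def node_def)
      then show False using old stk by auto
    qed
    then have nb: "(bse s x, v) \<notin> T\<^sup>*" .
    have A: "w \<notin> sub M s' v" if "w \<in> fvs (stk s)" for w
      using that old sub'_old[OF vl, of w] nb by blast
    have "y' \<notin> sub M s v" using y'n by (simp add: sub_def)
    then have "y' \<notin> sub M s' v" using sub'_old[OF vl, of y'] nb by simp
    then show ?thesis unfolding fvs_stk' using A by auto
  qed
  show ?thesis unfolding inv_def
    using C1 C2 C3 C4 C5 C6 C7 C8 C9 C10 C11 C12 by blast
qed

end

locale AU = G V E M fs for V :: "'v set" and E M :: "'v set set" and fs :: "'v list" +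
  fixes s :: "'v st" and x :: 'v and R :: "'v set" and rs :: "'v frame list" and y :: 'v
  assumes Is: "inv s" and stk: "stk s = Scan x R # rs" and yn: "lab s y = None"
    and yu: "\<not> matched M y"
begin

abbreviation T where "T \<equiv> tree_rel M s"
definition "s' = s\<lparr>lab := (lab s)(y := Some Odd), par := (par s)(y := x),
   cp := insert (cur_root s, y) (cp s), stk := []\<rparr>"
abbreviation T' where "T' \<equiv> tree_rel M s'"

lemma xe: "lab s x = Some Even"
  using I6[OF Is, of x] stk by simp
lemma bxl: "lab s (bse s x) = Some Even"
  using I1[OF Is xe] by simp
lemma old_ne: "lab s v \<noteq> None \<Longrightarrow> v \<noteq> y"
  using yn by auto
lemma lab'_ne: "v \<noteq> y \<Longrightarrow> lab s' v = lab s v"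
  by (simp add: s'_def)
lemma lab'_y: "lab s' y = Some Odd"
  by (simp add: s'_def)
lemma bse': "bse s' = bse s"
  by (simp add: s'_def)
lemma par'_ne: "v \<noteq> y \<Longrightarrow> par s' v = par s v"
  by (simp add: s'_def)
lemma par'_y: "par s' y = x"
  by (simp add: s'_def)
lemma other': "scanned s' = scanned s" "rest s' = rest s" "cp s' = insert (cur_root s, y) (cp s)"
  "stk s' = []"
  by (simp_all add: s'_def)

lemma np'_ne: "c \<noteq> y \<Longrightarrow> node_parent M s' c = node_parent M s c"
proof -
  assume c: "c \<noteq> y"
  have e: "lab s' c = lab s c" "par s' c = par s c" "bse s' = bse s" using c by (simp_all add: s'_def)
  show ?thesis unfolding node_parent_def e by (rule refl)
qed

lemma np'_y: "node_parent M s' y = Some (bse s x)"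
  by (simp add: node_parent_def s'_def)

lemma T'_iff: "(c, p) \<in> T' \<longleftrightarrow> (c, p) \<in> T \<or> (c = y \<and> p = bse s x)"
proof (cases "c = y")
  case True
  then have "(c, p) \<notin> T" using edge_lab[OF Is, of y p] yn by auto
  then show ?thesis using True np'_y by (auto simp: tree_rel_def)
next
  case False
  then show ?thesis using np'_ne[OF False] by (auto simp: tree_rel_def)
qed

lemma bs'_ne: "v \<noteq> y \<Longrightarrow> bs s' v = bs s v"
  using lab'_ne bse' by (simp add: bs_def)

lemma inv': "inv s'"
proof -
  have C1: "lab s' (bse s' v) = Some Even \<and> bse s' (bse s' v) = bse s' v"
    if e: "lab s' v = Some Even" for v
  proof -
    have vy: "v \<noteq> y" using e lab'_y by auto
    then have le: "lab s v = Some Even" using e lab'_ne[OF vy] by simp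
    have b1: "lab s (bse s v) = Some Even" and b2: "bse s (bse s v) = bse s v" using I1[OF Is le] by auto
    have "bse s v \<noteq> y" using b1 yn by auto
    then show ?thesis using b1 b2 lab'_ne[of "bse s v"] bse' by simp
  qed
  have C2: "lab s' (par s' v) = Some Even" if o: "lab s' v = Some Odd" for v
  proof (cases "v = y")
    case True
    have "x \<noteq> y" using xe yn by auto
    then show ?thesis using True par'_y lab'_ne[of x] xe by simp
  next
    case False
    then have lo: "lab s v = Some Odd" using o lab'_ne[OF False] by simp
    have pe: "lab s (par s v) = Some Even" using I2[OF Is lo] .
    have "par s v \<noteq> y" using pe yn by auto
    then show ?thesis using par'_ne[OF False] lab'_ne[of "par s v"] pe by simp
  qed
  have C3: "bs s' (mate M v)" if o: "lab s' v = Some Odd" and m: "matched M v" for v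
  proof -
    have vy: "v \<noteq> y" using m yu by auto
    then have lo: "lab s v = Some Odd" using o lab'_ne[OF vy] by simp
    have b: "bs s (mate M v)" using I3[OF Is lo m] .
    then have "mate M v \<noteq> y" using yn by (auto simp: bs_def)
    then show ?thesis using b bs'_ne by simp
  qed
  have C4: "lab s' (mate M v) = Some Odd" if b: "bs s' v" and m: "matched M v" for v
  proof -
    have vy: "v \<noteq> y" using m yu by auto
    then have "bs s v" using b bs'_ne by simp
    then have lo: "lab s (mate M v) = Some Odd" using I4[OF Is] m by blast
    then have "mate M v \<noteq> y" using yn by auto
    then show ?thesis using lo lab'_ne by simp
  qed
  have C5: "lab s' (mate M v) \<noteq> None" if l: "lab s' v \<noteq> None" and m: "matched M v" for v
  proof -
    have vy: "v \<noteq> y" using m yu by auto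
    then have "lab s v \<noteq> None" using l lab'_ne[OF vy] by simp
    then have lo: "lab s (mate M v) \<noteq> None" using I5[OF Is] m by blast
    show ?thesis
    proof (cases "mate M v = y")
      case True then show ?thesis using lab'_y by simp
    next
      case False then show ?thesis using lo lab'_ne[OF False] by simp
    qed
  qed
  have C8: "lab s' v = Some Even" if "v \<in> scanned s'" for v
  proof -
    have "lab s v = Some Even" using that I8[OF Is] by (simp add: other')
    moreover then have "v \<noteq> y" using yn by auto
    ultimately show ?thesis using lab'_ne by simp
  qed
  have C9: "\<exists>st::'v \<Rightarrow> nat. \<forall>c p. (c, p) \<in> T' \<longrightarrow> st p < st c"
  proof -
    obtain st :: "'v \<Rightarrow> nat" where st: "\<And>c p. (c, p) \<in> T \<Longrightarrow> st p < st c"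
      using I9[OF Is] by blast
    define st' where "st' = st(y := st (bse s x) + 1)"
    have "st' p < st' c" if e: "(c, p) \<in> T'" for c p
    proof -
      have bx: "bse s x \<noteq> y" using bxl yn by auto
      from e T'_iff consider "(c, p) \<in> T" | "c = y \<and> p = bse s x" by blast
      then show ?thesis
      proof cases
        case 1
        then have "lab s c \<noteq> None" "lab s p \<noteq> None" using edge_lab[OF Is] by blast+
        then have "c \<noteq> y" "p \<noteq> y" using yn by auto
        then show ?thesis using st[OF 1] by (simp add: st'_def)
      next
        case 2 then show ?thesis using bx by (simp add: st'_def)
      qed
    qed
    then show ?thesis by blast
  qed
  have C10: "\<forall>g \<in> set (rest s'). lab s' g \<noteq> None \<longrightarrow> (\<exists>p\<in>cp s'. g = fst p \<or> g = snd p)"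
  proof (intro ballI impI)
    fix g assume g: "g \<in> set (rest s')" "lab s' g \<noteq> None"
    show "\<exists>p\<in>cp s'. g = fst p \<or> g = snd p"
    proof (cases "g = y")
      case True then show ?thesis by (auto simp: other')
    next
      case False
      then have "lab s g \<noteq> None" using g lab'_ne[OF False] by simp
      moreover have "g \<in> set (rest s)" using g(1) other' by simp
      ultimately have "\<exists>p\<in>cp s. g = fst p \<or> g = snd p" using I10(3)[OF Is] by blast
      then show ?thesis by (auto simp: other')
    qed
  qed
  show ?thesis unfolding inv_def
    using C1 C2 C3 C4 C5 C8 C9 C10 I10(1,2)[OF Is] by (simp add: other')
qed

end

locale NT = G V E M fs for V :: "'v set" and E M :: "'v set set" and fs :: "'v list" +
  fixes s :: "'v st" and f :: 'v and fs' :: "'v list"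
  assumes Is: "inv s" and stk: "stk s = []" and rst: "rest s = f # fs'"
    and nocp: "\<not> (\<exists>p\<in>cp s. f = fst p \<or> f = snd p)"
begin

abbreviation T where "T \<equiv> tree_rel M s"
definition "s' = s\<lparr>lab := (lab s)(f := Some Even), bse := (bse s)(f := f),
   stk := [Scan f (nm_nbrs E M f)], rest := fs', cur_root := f\<rparr>"
abbreviation T' where "T' \<equiv> tree_rel M s'"

lemma fl: "lab s f = None"
proof (rule ccontr)
  assume "lab s f \<noteq> None"
  then have "\<exists>p\<in>cp s. f = fst p \<or> f = snd p" using I10(3)[OF Is, of f] rst by simp
  then show False using nocp by blast
qed

lemma fu: "\<not> matched M f"
  using I10(2)[OF Is] rst sfs by auto

lemma lab'_ne: "v \<noteq> f \<Longrightarrow> lab s' v = lab s v"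
  by (simp add: s'_def)
lemma bse'_ne: "v \<noteq> f \<Longrightarrow> bse s' v = bse s v"
  by (simp add: s'_def)
lemma lab'_f: "lab s' f = Some Even" and bse'_f: "bse s' f = f"
  by (simp_all add: s'_def)
lemma other': "scanned s' = scanned s" "rest s' = fs'" "cp s' = cp s"
  "stk s' = [Scan f (nm_nbrs E M f)]" "par s' = par s"
  by (simp_all add: s'_def)

lemma np': "node_parent M s' c = node_parent M s c"
proof (cases "c = f")
  case True
  then show ?thesis using fl fu by (simp add: node_parent_def s'_def)
next
  case False
  show ?thesis
  proof (cases "lab s c = Some Odd")
    case True
    have "lab s (par s c) = Some Even" using I2[OF Is True] .
    then have "par s c \<noteq> f" using fl by auto
    then show ?thesis using True False by (simp add: node_parent_def s'_def)
  next
    case F2: False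
    consider "lab s c = None" | "lab s c = Some Even" using F2 by (cases "lab s c") (auto intro: lbl.exhaust)
    then show ?thesis
    proof cases
      case 1 then show ?thesis using False by (simp add: node_parent_def s'_def)
    next
      case 2 then show ?thesis using False by (simp add: node_parent_def s'_def)
    qed
  qed
qed

lemma T'_eq: "T' = T"
  by (simp add: tree_rel_def np')

lemma bs'_ne: "v \<noteq> f \<Longrightarrow> bs s' v = bs s v"
  using lab'_ne bse'_ne by (simp add: bs_def)

lemma node'_ne: "w \<noteq> f \<Longrightarrow> node s' w = node s w"
  using lab'_ne bse'_ne by (simp add: node_def)

lemma f_nsub: assumes "lab s v \<noteq> None" shows "f \<notin> sub M s' v"
proof
  assume "f \<in> sub M s' v"
  then have p: "(f, v) \<in> T\<^sup>*" using lab'_f bse'_f T'_eq by (simp add: sub_def node_def)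
  have "f \<noteq> v" using assms fl by auto
  then obtain c where "(f, c) \<in> T" using p by (metis converse_rtranclE)
  then show False using edge_lab[OF Is] fl by blast
qed

lemma inv': "inv s'"
proof -
  have C1: "lab s' (bse s' v) = Some Even \<and> bse s' (bse s' v) = bse s' v"
    if e: "lab s' v = Some Even" for v
  proof (cases "v = f")
    case True then show ?thesis using lab'_f bse'_f by simp
  next
    case False
    then have le: "lab s v = Some Even" using e lab'_ne[OF False] by simp
    have b1: "lab s (bse s v) = Some Even" and b2: "bse s (bse s v) = bse s v" using I1[OF Is le] by auto
    have "bse s v \<noteq> f" using b1 fl by auto
    then show ?thesis using b1 b2 lab'_ne[of "bse s v"] bse'_ne[of "bse s v"] bse'_ne[OF False] by simp
  qed
  have C2: "lab s' (par s' v) = Some Even" if o: "lab s' v = Some Odd" for v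
  proof -
    have vf: "v \<noteq> f" using o lab'_f by auto
    then have lo: "lab s v = Some Odd" using o lab'_ne[OF vf] by simp
    have pe: "lab s (par s v) = Some Even" using I2[OF Is lo] .
    have "par s v \<noteq> f" using pe fl by auto
    then show ?thesis using other'(5) lab'_ne[of "par s v"] pe by simp
  qed
  have C3: "bs s' (mate M v)" if o: "lab s' v = Some Odd" and m: "matched M v" for v
  proof -
    have vf: "v \<noteq> f" using o lab'_f by auto
    then have lo: "lab s v = Some Odd" using o lab'_ne[OF vf] by simp
    have b: "bs s (mate M v)" using I3[OF Is lo m] .
    then have "mate M v \<noteq> f" using fl by (auto simp: bs_def)
    then show ?thesis using b bs'_ne by simp
  qed
  have C4: "lab s' (mate M v) = Some Odd" if b: "bs s' v" and m: "matched M v" for v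
  proof -
    have vf: "v \<noteq> f" using m fu by auto
    then have "bs s v" using b bs'_ne by simp
    then have lo: "lab s (mate M v) = Some Odd" using I4[OF Is] m by blast
    then have "mate M v \<noteq> f" using fl by auto
    then show ?thesis using lo lab'_ne by simp
  qed
  have C5: "lab s' (mate M v) \<noteq> None" if l: "lab s' v \<noteq> None" and m: "matched M v" for v
  proof -
    have vf: "v \<noteq> f" using m fu by auto
    then have "lab s v \<noteq> None" using l lab'_ne[OF vf] by simp
    then have lo: "lab s (mate M v) \<noteq> None" using I5[OF Is] m by blast
    then have "mate M v \<noteq> f" using fl by auto
    then show ?thesis using lo lab'_ne by simp
  qed
  have C6: "lab s' v = Some Even" if "v \<in> fvs (stk s')" for v
    using that lab'_f by (simp add: other')
  have C7: "bse s' v \<noteq> v" if "v \<in> callv (stk s')" for v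
    using that by (simp add: other')
  have C8: "lab s' v = Some Even" if "v \<in> scanned s'" for v
  proof -
    have "lab s v = Some Even" using that I8[OF Is] by (simp add: other')
    moreover then have "v \<noteq> f" using fl by auto
    ultimately show ?thesis using lab'_ne by simp
  qed
  have C9: "\<exists>st::'v \<Rightarrow> nat. \<forall>c p. (c, p) \<in> T' \<longrightarrow> st p < st c"
    using I9[OF Is] T'_eq by simp
  have C10: "distinct (rest s')" "set (rest s') \<subseteq> set fs"
    "\<forall>g \<in> set (rest s'). lab s' g \<noteq> None \<longrightarrow> (\<exists>p\<in>cp s'. g = fst p \<or> g = snd p)"
  proof -
    have d: "distinct (f # fs')" "set (f # fs') \<subseteq> set fs" using I10(1,2)[OF Is] rst by auto
    show "distinct (rest s')" "set (rest s') \<subseteq> set fs" using d by (auto simp: other')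
    show "\<forall>g \<in> set (rest s'). lab s' g \<noteq> None \<longrightarrow> (\<exists>p\<in>cp s'. g = fst p \<or> g = snd p)"
    proof (intro ballI impI)
      fix g assume g: "g \<in> set (rest s')" "lab s' g \<noteq> None"
      then have gf: "g \<noteq> f" using d(1) by (auto simp: other')
      then have "lab s g \<noteq> None" using g lab'_ne[OF gf] by simp
      then show "\<exists>p\<in>cp s'. g = fst p \<or> g = snd p" using I10(3)[OF Is] g(1) rst by (auto simp: other')
    qed
  qed
  have C11: "SI (bs s') (sub M s') (stk s')"
    by (simp add: other')
  have C12: "fvs (stk s') \<inter> sub M s' v = {}" if vs: "v \<in> scanned s'" and b: "bs s' v" for v
  proof -
    have "lab s v \<noteq> None" using I8[OF Is] vs by (simp add: other')
    then show ?thesis using f_nsub by (simp add: other')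
  qed
  show ?thesis unfolding inv_def
    using C1 C2 C3 C4 C5 C6 C7 C8 C9 C10 C11 C12 by blast
qed

end

context G
begin

lemma same_struct:
  assumes "lab s' = lab s" "par s' = par s" "bse s' = bse s"
  shows "tree_rel M s' = tree_rel M s" "sub M s' = sub M s" "bs s' = bs s" "node s' = node s"
proof -
  show t: "tree_rel M s' = tree_rel M s"
    unfolding tree_rel_def node_parent_def assms by (rule refl)
  show "node s' = node s" using assms by (simp add: node_def fun_eq_iff)
  then show "sub M s' = sub M s" using assms t by (simp add: sub_def fun_eq_iff)
  show "bs s' = bs s" using assms by (simp add: bs_def fun_eq_iff)
qed

lemma inv_stk:
  assumes I: "inv s" and eq: "lab s' = lab s" "par s' = par s" "bse s' = bse s" "cp s' = cp s"
    and f1: "fvs (stk s') \<subseteq> fvs (stk s)" and f2: "callv (stk s') \<subseteq> callv (stk s)"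
    and sc: "\<And>v. v \<in> scanned s' \<Longrightarrow> lab s v = Some Even"
    and r: "distinct (rest s')" "set (rest s') \<subseteq> set fs"
       "\<And>g. g \<in> set (rest s') \<Longrightarrow> lab s g \<noteq> None \<Longrightarrow> (\<exists>p\<in>cp s. g = fst p \<or> g = snd p)"
    and si: "SI (bs s) (sub M s) (stk s')"
    and d: "\<And>v. v \<in> scanned s' \<Longrightarrow> bs s v \<Longrightarrow> fvs (stk s') \<inter> sub M s v = {}"
  shows "inv s'"
proof -
  note ss = same_struct[OF eq(1,2,3)]
  have A: "\<forall>v \<in> fvs (stk s'). lab s' v = Some Even" using f1 I6[OF I] eq(1) by auto
  have B: "\<forall>v \<in> callv (stk s'). bse s' v \<noteq> v" using f2 I7[OF I] eq(3) by auto
  have C: "\<exists>st::'v \<Rightarrow> nat. \<forall>c p. (c, p) \<in> tree_rel M s' \<longrightarrow> st p < st c" using I9[OF I] ss(1) by simp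
  show ?thesis unfolding inv_def
    using I A B C sc r si d ss eq
    by (simp add: inv_def)
qed


lemma inv_init: "inv (init_st fs)"
proof -
  have t: "tree_rel M (init_st fs) = {}" by (simp add: tree_rel_def node_parent_def init_st_def)
  show ?thesis unfolding inv_def t using dfs by (simp add: init_st_def bs_def)
qed

lemma SI_R: "SI b sb (Scan v R' # l) = SI b sb (Scan v R # l)"
  by simp

lemma inv_step: assumes I: "inv s" and st: "step E M s s'" shows "inv s'"
proof -
  from st consider "next_tree_step E M s s'" | "finish_step s s'" | "calls_step E M s s'"
    | "scan_step E M s s'" | "blossom_step E M s s'" unfolding step_def by blast
  then show ?thesis
  proof cases
    case 1
    then obtain f fs' where stk0: "stk s = []" and rst: "rest s = f # fs'" and
      ite: "if (\<exists>p\<in>cp s. f = fst p \<or> f = snd p) then s' = s\<lparr>rest := fs'\<rparr>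
         else s' = s\<lparr>lab := (lab s)(f := Some Even), bse := (bse s)(f := f),
                      stk := [Scan f (nm_nbrs E M f)], rest := fs', cur_root := f\<rparr>"
      unfolding next_tree_step_def by blast
    show ?thesis
    proof (cases "\<exists>p\<in>cp s. f = fst p \<or> f = snd p")
      case True
      then have s': "s' = s\<lparr>rest := fs'\<rparr>" using ite by simp
      have d: "distinct (f # fs')" "set (f # fs') \<subseteq> set fs" using I10(1,2)[OF I] rst by auto
      show ?thesis
      proof (rule inv_stk[OF I])
        show "SI (bs s) (sub M s) (stk s')" using I11[OF I] s' by simp
        show "distinct (rest s')" "set (rest s') \<subseteq> set fs" using d s' by auto
        show "\<exists>p\<in>cp s. g = fst p \<or> g = snd p" if "g \<in> set (rest s')" "lab s g \<noteq> None" for g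
          using that I10(3)[OF I, of g] rst s' by simp
        show "fvs (stk s') \<inter> sub M s v = {}" if "v \<in> scanned s'" "bs s v" for v
          using that I12[OF I] s' by simp
      qed (use s' I8[OF I] in auto)
    next
      case False
      interpret NT V E M fs s f fs' by unfold_locales (use I stk0 rst False in auto)
      have "s' = NT.s' E M s f fs'" using ite False by (simp add: s'_def)
      then show ?thesis using inv' by simp
    qed
  next
    case 2
    then obtain x rs where stk0: "stk s = Scan x {} # rs"
      and s': "s' = s\<lparr>stk := rs, scanned := insert x (scanned s)\<rparr>"
      unfolding finish_step_def by blast
    have SI0: "SI (bs s) (sub M s) (Scan x {} # rs)" using I11[OF I] stk0 by simp
    show ?thesis
    proof (rule inv_stk[OF I])
      show "fvs (stk s') \<subseteq> fvs (stk s)" using s' stk0 by auto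
      show "callv (stk s') \<subseteq> callv (stk s)" using s' stk0 by auto
      show "lab s v = Some Even" if "v \<in> scanned s'" for v
        using that s' I8[OF I] I6[OF I, of x] stk0 by auto
      show "SI (bs s) (sub M s) (stk s')" using SI0 s' by simp
      show "fvs (stk s') \<inter> sub M s v = {}" if v: "v \<in> scanned s'" "bs s v" for v
      proof (cases "v = x")
        case True then show ?thesis using SI0 v s' by simp
      next
        case False
        then have "v \<in> scanned s" using v s' by simp
        then show ?thesis using I12[OF I _ v(2)] s' stk0 by auto
      qed
    qed (use s' I10[OF I] in auto)
  next
    case 3
    then consider rs where "stk s = Calls [] # rs" "s' = s\<lparr>stk := rs\<rparr>"
      | u us rs where "stk s = Calls (u # us) # rs" "s' = s\<lparr>stk := Scan u (nm_nbrs E M u) # Calls us # rs\<rparr>"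
      unfolding calls_step_def by blast
    then show ?thesis
    proof cases
      case (1 rs)
      show ?thesis
      proof (rule inv_stk[OF I])
        show "SI (bs s) (sub M s) (stk s')" using I11[OF I] 1 by simp
        show "fvs (stk s') \<inter> sub M s v = {}" if "v \<in> scanned s'" "bs s v" for v
          using that I12[OF I] 1 by auto
      qed (use 1 I10[OF I] I8[OF I] in auto)
    next
      case (2 u us rs)
      have "u \<in> callv (stk s)" using 2 by simp
      then have nb: "\<not> bs s u" using I7[OF I] by (auto simp: bs_def)
      show ?thesis
      proof (rule inv_stk[OF I])
        show "SI (bs s) (sub M s) (stk s')" using I11[OF I] 2 nb by simp
        show "fvs (stk s') \<inter> sub M s v = {}" if "v \<in> scanned s'" "bs s v" for v
          using that I12[OF I] 2 by auto
      qed (use 2 I10[OF I] I8[OF I] in auto)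
    qed
  next
    case 4
    then obtain x R rs y where stk0: "stk s = Scan x R # rs" and yR: "y \<in> R" and
      ite: "if lab s y = None \<and> \<not> matched M y then
           s' = s\<lparr>lab := (lab s)(y := Some Odd), par := (par s)(y := x),
                  cp := insert (cur_root s, y) (cp s), stk := []\<rparr>
         else if lab s y = None \<and> matched M y then
           s' = s\<lparr>lab := (lab s)(y := Some Odd, mate M y := Some Even),
                  par := (par s)(y := x), bse := (bse s)(mate M y := mate M y),
                  stk := Scan (mate M y) (nm_nbrs E M (mate M y)) # Scan x (R - {y}) # rs\<rparr>
         else if lab s y = Some Even \<and> proper_desc M s (bse s y) (bse s x) then False
         else s' = s\<lparr>stk := Scan x (R - {y}) # rs\<rparr>"
      unfolding scan_step_def by blast
    consider "lab s y = None \<and> \<not> matched M y" | "lab s y = None \<and> matched M y"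
      | "\<not> (lab s y = None)" by blast
    then show ?thesis
    proof cases
      case 1
      interpret AU V E M fs s x R rs y by unfold_locales (use I stk0 1 in auto)
      have "s' = AU.s' s x y" using ite 1 by (simp add: s'_def)
      then show ?thesis using inv' by simp
    next
      case 2
      interpret GR V E M fs s x R rs y by unfold_locales (use I stk0 2 in auto)
      have "s' = GR.s' E M s x R rs y" using ite 2 by (simp add: s'_def y'_def)
      then show ?thesis using inv' by simp
    next
      case 3
      then have s': "s' = s\<lparr>stk := Scan x (R - {y}) # rs\<rparr>" using ite by (auto split: if_splits)
      show ?thesis
      proof (rule inv_stk[OF I])
        show "SI (bs s) (sub M s) (stk s')" using I11[OF I] stk0 s' by simp
        show "fvs (stk s') \<inter> sub M s v = {}" if "v \<in> scanned s'" "bs s v" for v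
          using that I12[OF I] stk0 s' by auto
      qed (use s' stk0 I10[OF I] I8[OF I] in auto)
    qed
  next
    case 5
    then obtain x R rs y us where stk0: "stk s = Scan x R # rs" and yR: "y \<in> R"
      and ye: "lab s y = Some Even" and pd: "proper_desc M s (bse s y) (bse s x)"
      and us: "set us = {v \<in> {n. (bse s y, n) \<in> (tree_rel M s)\<^sup>* \<and> (n, bse s x) \<in> (tree_rel M s)\<^sup>*}. lab s v = Some Odd}"
      and s': "s' = s\<lparr>lab := (\<lambda>v. if (v \<in> {n. (bse s y, n) \<in> (tree_rel M s)\<^sup>* \<and> (n, bse s x) \<in> (tree_rel M s)\<^sup>*} \<and> lab s v = Some Odd) \<or> (lab s v = Some Even \<and> bse s v \<in> {n. (bse s y, n) \<in> (tree_rel M s)\<^sup>* \<and> (n, bse s x) \<in> (tree_rel M s)\<^sup>*}) then Some Even else lab s v),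
                   bse := (\<lambda>v. if (v \<in> {n. (bse s y, n) \<in> (tree_rel M s)\<^sup>* \<and> (n, bse s x) \<in> (tree_rel M s)\<^sup>*} \<and> lab s v = Some Odd) \<or> (lab s v = Some Even \<and> bse s v \<in> {n. (bse s y, n) \<in> (tree_rel M s)\<^sup>* \<and> (n, bse s x) \<in> (tree_rel M s)\<^sup>*}) then bse s x else bse s v),
                   stk := Calls us # Scan x (R - {y}) # rs\<rparr>"
      unfolding blossom_step_def Let_def by blast
    interpret BL V E M fs s x R rs y us
      by unfold_locales (use I stk0 ye pd us in \<open>auto simp: proper_desc_def\<close>)
    have "s' = BL.s' M s x R rs y us"
      using s' unfolding s'_def inB_def P_def B_def by simp
    then show ?thesis using inv' by simp
  qed
qed

end

definition NB :: "'v set set \<Rightarrow> 'v st \<Rightarrow> 'v st \<Rightarrow> bool" where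
  "NB M a b \<longleftrightarrow> (\<forall>v. lab a v \<noteq> None \<longrightarrow> lab b v = lab a v \<and> node b v = node a v \<and>
        node_parent M b v = node_parent M a v) \<and>
     (\<forall>v. lab a v = None \<longrightarrow> lab b v \<noteq> None \<longrightarrow> lab a (node b v) = None) \<and>
     fvs (stk b) \<subseteq> fvs (stk a) \<union> {v. lab a v = None}"

definition Kp :: "'v set set \<Rightarrow> 'v st \<Rightarrow> 'v \<Rightarrow> 'v \<Rightarrow> bool" where
  "Kp M st a0 t0 \<longleftrightarrow> (a0, node st t0) \<in> (tree_rel M st)\<^sup>+ \<and>
     (\<forall>w. lab st w \<noteq> None \<longrightarrow> (a0, node st w) \<in> (tree_rel M st)\<^sup>* \<longrightarrow>
        (node st w, node st t0) \<in> (tree_rel M st)\<^sup>+ \<longrightarrow> w \<notin> fvs (stk st))"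

lemma NB_same:
  assumes "lab b = lab a" "par b = par a" "bse b = bse a" "fvs (stk b) \<subseteq> fvs (stk a)"
  shows "NB M a b"
  unfolding NB_def node_def node_parent_def assms(1,2,3) using assms(4) by auto

context NT begin
lemma NB': "NB M s s'"
proof -
  have A: "lab s' v = lab s v \<and> node s' v = node s v \<and> node_parent M s' v = node_parent M s v"
    if "lab s v \<noteq> None" for v
  proof -
    have vf: "v \<noteq> f" using that fl by auto
    show ?thesis using lab'_ne[OF vf] node'_ne[OF vf] np' by simp
  qed
  have B: "lab s (node s' v) = None" if "lab s v = None" "lab s' v \<noteq> None" for v
  proof -
    have "v = f"
    proof (rule ccontr)
      assume "v \<noteq> f"
      then have "lab s' v = lab s v" by (rule lab'_ne)
      then show False using that by simp
    qed
    then show ?thesis using lab'_f bse'_f fl by (simp add: node_def)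
  qed
  have C: "fvs (stk s') \<subseteq> fvs (stk s) \<union> {v. lab s v = None}" using fl by (simp add: other')
  show ?thesis unfolding NB_def using A B C by blast
qed
end

context AU begin
lemma NB': "NB M s s'"
proof -
  have A: "lab s' v = lab s v \<and> node s' v = node s v \<and> node_parent M s' v = node_parent M s v"
    if "lab s v \<noteq> None" for v
  proof -
    have vy: "v \<noteq> y" using that yn by auto
    have "node s' v = node s v" using lab'_ne[OF vy] bse' by (simp add: node_def)
    then show ?thesis using lab'_ne[OF vy] np'_ne[OF vy] by simp
  qed
  have B: "lab s (node s' v) = None" if "lab s v = None" "lab s' v \<noteq> None" for v
  proof -
    have "v = y"
    proof (rule ccontr)
      assume "v \<noteq> y"
      then have "lab s' v = lab s v" by (rule lab'_ne)
      then show False using that by simp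
    qed
    then show ?thesis using lab'_y yn by (simp add: node_def)
  qed
  have C: "fvs (stk s') \<subseteq> fvs (stk s) \<union> {v. lab s v = None}" by (simp add: other')
  show ?thesis unfolding NB_def using A B C by blast
qed
end

context GR begin
lemma NB': "NB M s s'"
proof -
  have A: "lab s' v = lab s v \<and> node s' v = node s v \<and> node_parent M s' v = node_parent M s v"
    if "lab s v \<noteq> None" for v
    using lab'_old[OF that] node'_old[OF that] np'_old[OF that] by simp
  have B: "lab s (node s' v) = None" if "lab s v = None" "lab s' v \<noteq> None" for v
  proof -
    have "v = y \<or> v = y'"
    proof (rule ccontr)
      assume "\<not> (v = y \<or> v = y')"
      then have "lab s' v = None" using lab'_new[OF that(1)] by blast
      then show False using that(2) by simp
    qed
    then show ?thesis
    proof
      assume "v = y" then show ?thesis using node'_y yn by simp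
    next
      assume "v = y'" then show ?thesis using node'_y' y'n by simp
    qed
  qed
  have C: "fvs (stk s') \<subseteq> fvs (stk s) \<union> {v. lab s v = None}"
    unfolding fvs_stk' using y'n by blast
  show ?thesis unfolding NB_def using A B C by blast
qed
end

context BL begin

lemma K_BL:
  assumes a0o: "lab s a0 = Some Odd" and a0o': "lab s' a0 = Some Odd"
    and tl: "lab s t0 \<noteq> None" and K: "Kp M s a0 t0"
  shows "Kp M s' a0 t0"
proof -
  have I': "inv s'" by (rule inv')
  have a0P: "a0 \<notin> P"
  proof
    assume "a0 \<in> P"
    then have "inB a0" using a0o by (simp add: inB_def)
    then show False using a0o' by (simp add: lab')
  qed
  have fa0: "f a0 = a0" using a0P by (simp add: f_def)
  define nt where "nt = node s t0"
  have K1: "(a0, nt) \<in> T\<^sup>+" using K by (simp add: Kp_def nt_def)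
  have K2: "\<And>w. lab s w \<noteq> None \<Longrightarrow> (a0, node s w) \<in> T\<^sup>* \<Longrightarrow> (node s w, nt) \<in> T\<^sup>+ \<Longrightarrow> w \<notin> fvs (stk s)"
    using K by (simp add: Kp_def nt_def)
  have nt': "node s' t0 = f nt" using node'[OF tl] by (simp add: nt_def)
  have part1: "(a0, node s' t0) \<in> T'\<^sup>+"
  proof -
    have "(a0, nt) \<in> T\<^sup>*" using K1 by simp
    then have "(a0, node s' t0) \<in> T'\<^sup>*" using L1[of a0 nt] fa0 nt' by simp
    moreover have "a0 \<noteq> node s' t0"
    proof (cases "nt \<in> P")
      case True then show ?thesis using nt' a0P BP by (simp add: f_def) blast
    next
      case False
      then have "node s' t0 = nt" using nt' by (simp add: f_def)
      moreover have "a0 \<noteq> nt" using K1 acyc[OF Is] by blast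
      ultimately show ?thesis by simp
    qed
    ultimately show ?thesis by (simp add: rtrancl_eq_or_trancl)
  qed
  have xl: "lab s x \<noteq> None" using xe by simp
  have xf: "x \<in> fvs (stk s)" using stk by simp
  have part2: "w \<notin> fvs (stk s')"
    if wl': "lab s' w \<noteq> None" and p1: "(a0, node s' w) \<in> T'\<^sup>*" and p2: "(node s' w, node s' t0) \<in> T'\<^sup>+" for w
  proof
    assume wf: "w \<in> fvs (stk s')"
    have wl: "lab s w \<noteq> None" using wl' labeled' by blast
    define nw where "nw = node s w"
    have nw': "node s' w = f nw" using node'[OF wl] by (simp add: nw_def)
    show False
    proof (cases "nw \<in> P")
      case True
      then have "node s' w = B" using nw' by (simp add: f_def)
      then obtain u where u: "f u = B" "(a0, u) \<in> T\<^sup>*" using L2[OF p1 fa0] by metis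
      have "(u, B) \<in> T\<^sup>*"
      proof (cases "u \<in> P")
        case True then show ?thesis by (simp add: P_def)
      next
        case False then show ?thesis using u(1) by (simp add: f_def)
      qed
      then have a0B: "(a0, B) \<in> T\<^sup>*" using u(2) by simp
      have Bt: "(B, f nt) \<in> T'\<^sup>+" using p2 \<open>node s' w = B\<close> nt' by simp
      show False
      proof (cases "nt \<in> P")
        case True
        then have "(B, B) \<in> T'\<^sup>+" using Bt by (simp add: f_def)
        then show False using acyc[OF I'] by blast
      next
        case False
        then have "(B, nt) \<in> T'\<^sup>*" using Bt by (simp add: f_def)
        then obtain u2 where u2: "f u2 = nt" "(B, u2) \<in> T\<^sup>*" using L2[of B nt B] fB by metis
        have "u2 \<notin> P"
        proof
          assume "u2 \<in> P"
          then have "nt = B" using u2(1) by (simp add: f_def)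
          then show False using False BP by simp
        qed
        then have "u2 = nt" using u2(1) by (simp add: f_def)
        moreover have "B \<noteq> nt" using False BP by blast
        ultimately have "(B, nt) \<in> T\<^sup>+" using u2(2) by (simp add: rtrancl_eq_or_trancl)
        then have "x \<notin> fvs (stk s)" using K2[OF xl] a0B nodex by simp
        then show False using xf by simp
      qed
    next
      case False
      then have nwe: "node s' w = nw" using nw' by (simp add: f_def)
      have "w \<notin> set us"
      proof
        assume "w \<in> set us"
        then have "w \<in> P" "lab s w = Some Odd" using us_P by auto
        then show False using False by (simp add: nw_def node_def)
      qed
      then have wfs: "w \<in> fvs (stk s)" using wf fvs_stk' by blast
      obtain u where u: "f u = nw" "(a0, u) \<in> T\<^sup>*" using L2[OF p1 fa0] nwe by metis
      have "u \<notin> P"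
      proof
        assume "u \<in> P"
        then have "nw = B" using u(1) by (simp add: f_def)
        then show False using False BP by simp
      qed
      then have a0nw: "(a0, nw) \<in> T\<^sup>*" using u by (simp add: f_def)
      have "(nw, nt) \<in> T\<^sup>+"
      proof (cases "nt \<in> P")
        case False
        then have "(nw, nt) \<in> T'\<^sup>+" using p2 nwe nt' by (simp add: f_def)
        then have ne: "nw \<noteq> nt" using acyc[OF I'] by blast
        have "(nw, nt) \<in> T'\<^sup>*" using \<open>(nw, nt) \<in> T'\<^sup>+\<close> by simp
        then obtain u2 where u2: "f u2 = nt" "(nw, u2) \<in> T\<^sup>*" using L2[of nw nt nw] \<open>nw \<notin> P\<close> f_nP
          by metis
        have "u2 \<notin> P"
        proof
          assume "u2 \<in> P"
          then have "nt = B" using u2(1) by (simp add: f_def)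
          then show False using False BP by simp
        qed
        then have "u2 = nt" using u2(1) by (simp add: f_def)
        then show ?thesis using u2(2) ne by (simp add: rtrancl_eq_or_trancl)
      next
        case True
        then have "(nw, B) \<in> T'\<^sup>*" using p2 nwe nt' by (simp add: f_def)
        then obtain u2 where u2: "f u2 = B" "(nw, u2) \<in> T\<^sup>*" using L2[of nw B nw] \<open>nw \<notin> P\<close> f_nP
          by metis
        have "(u2, B) \<in> T\<^sup>*"
        proof (cases "u2 \<in> P")
          case True then show ?thesis by (simp add: P_def)
        next
          case False then show ?thesis using u2(1) by (simp add: f_def)
        qed
        then have nwB: "(nw, B) \<in> T\<^sup>*" using u2(2) by simp
        have "(a0, nt) \<in> T\<^sup>*" using K1 by simp
        from conf[OF Is a0nw this] show ?thesis
        proof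
          assume "(nw, nt) \<in> T\<^sup>*"
          moreover have "nw \<noteq> nt" using True \<open>nw \<notin> P\<close> by blast
          ultimately show ?thesis by (simp add: rtrancl_eq_or_trancl)
        next
          assume "(nt, nw) \<in> T\<^sup>*"
          moreover have "(bse s y, nt) \<in> T\<^sup>*" using True by (simp add: P_def)
          ultimately have "nw \<in> P" using nwB by (auto simp: P_def)
          then show ?thesis using \<open>nw \<notin> P\<close> by simp
        qed
      qed
      then show False using K2[OF wl] a0nw wfs by (simp add: nw_def)
    qed
  qed
  show ?thesis unfolding Kp_def using part1 part2 by blast
qed

lemma final_BL:
  assumes a0o: "lab s a0 = Some Odd" and a0e': "lab s' a0 = Some Even"
    and tl: "lab s t0 \<noteq> None" and K: "Kp M s a0 t0"
  shows "lab s' t0 = Some Even \<and> bse s' t0 = bse s' a0"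
proof -
  have ia: "inB a0" using a0o a0e' by (auto simp: lab' split: if_splits)
  then have a0P: "a0 \<in> P" using a0o by (simp add: inB_def)
  define nt where "nt = node s t0"
  have K1: "(a0, nt) \<in> T\<^sup>*" using K by (auto simp: Kp_def nt_def)
  have K2: "\<And>w. lab s w \<noteq> None \<Longrightarrow> (a0, node s w) \<in> T\<^sup>* \<Longrightarrow> (node s w, nt) \<in> T\<^sup>+ \<Longrightarrow> w \<notin> fvs (stk s)"
    using K by (simp add: Kp_def nt_def)
  have a0B: "(a0, B) \<in> T\<^sup>*" and ya0: "(bse s y, a0) \<in> T\<^sup>*" using a0P by (auto simp: P_def)
  have "nt \<in> P"
  proof -
    from conf[OF Is a0B K1] show ?thesis
    proof
      assume Bnt: "(B, nt) \<in> T\<^sup>*"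
      show ?thesis
      proof (cases "B = nt")
        case True then show ?thesis using BP by simp
      next
        case False
        then have "(B, nt) \<in> T\<^sup>+" using Bnt by (simp add: rtrancl_eq_or_trancl)
        then have "x \<notin> fvs (stk s)" using K2[of x] xe a0B nodex by simp
        then show ?thesis using stk by simp
      qed
    next
      assume "(nt, B) \<in> T\<^sup>*"
      moreover have "(bse s y, nt) \<in> T\<^sup>*" using ya0 K1 by simp
      ultimately show ?thesis by (simp add: P_def)
    qed
  qed
  then have "inB t0" using tl by (simp add: inB_iff nt_def)
  then show ?thesis using ia by (simp add: lab' bse')
qed

end

context G
begin

lemma path_NB:
  assumes I: "inv a" and nb: "NB M a b" and cl: "lab a c \<noteq> None"
  shows "(c, v) \<in> (tree_rel M b)\<^sup>* \<longleftrightarrow> (c, v) \<in> (tree_rel M a)\<^sup>*"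
proof -
  have np: "\<And>v. lab a v \<noteq> None \<Longrightarrow> node_parent M b v = node_parent M a v"
    using nb by (simp add: NB_def)
  show ?thesis
  proof
    assume "(c, v) \<in> (tree_rel M b)\<^sup>*"
    then show "(c, v) \<in> (tree_rel M a)\<^sup>*"
    proof (induction rule: rtrancl_induct)
      case base then show ?case by simp
    next
      case (step v w)
      have "lab a v \<noteq> None" using rtr_lab[OF I step(3) cl] .
      then have "(v, w) \<in> tree_rel M a" using step(2) np by (simp add: tree_rel_def)
      then show ?case using step(3) by simp
    qed
  next
    assume "(c, v) \<in> (tree_rel M a)\<^sup>*"
    then show "(c, v) \<in> (tree_rel M b)\<^sup>*"
    proof (induction rule: rtrancl_induct)
      case base then show ?case by simp
    next
      case (step v w)
      have "lab a v \<noteq> None" using rtr_lab[OF I step(1) cl] .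
      then have "(v, w) \<in> tree_rel M b" using step(2) np by (simp add: tree_rel_def)
      then show ?case using step(3) by simp
    qed
  qed
qed

lemma tpath_NB:
  assumes I: "inv a" and nb: "NB M a b" and cl: "lab a c \<noteq> None"
  shows "(c, v) \<in> (tree_rel M b)\<^sup>+ \<longleftrightarrow> (c, v) \<in> (tree_rel M a)\<^sup>+"
proof -
  have np: "node_parent M b c = node_parent M a c"
    using nb cl by (simp add: NB_def)
  have e: "(c, d) \<in> tree_rel M b \<longleftrightarrow> (c, d) \<in> tree_rel M a" for d
    using np by (simp add: tree_rel_def)
  show ?thesis
  proof
    assume "(c, v) \<in> (tree_rel M b)\<^sup>+"
    then obtain d where d: "(c, d) \<in> tree_rel M b" "(d, v) \<in> (tree_rel M b)\<^sup>*" by (metis tranclD)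
    then have da: "(c, d) \<in> tree_rel M a" using e by simp
    then have "lab a d \<noteq> None" using edge_lab[OF I] by blast
    then have "(d, v) \<in> (tree_rel M a)\<^sup>*" using path_NB[OF I nb] d(2) by blast
    then show "(c, v) \<in> (tree_rel M a)\<^sup>+" using da by simp
  next
    assume "(c, v) \<in> (tree_rel M a)\<^sup>+"
    then obtain d where d: "(c, d) \<in> tree_rel M a" "(d, v) \<in> (tree_rel M a)\<^sup>*" by (metis tranclD)
    then have db: "(c, d) \<in> tree_rel M b" using e by simp
    have "lab a d \<noteq> None" using edge_lab[OF I d(1)] by blast
    then have "(d, v) \<in> (tree_rel M b)\<^sup>*" using path_NB[OF I nb] d(2) by blast
    then show "(c, v) \<in> (tree_rel M b)\<^sup>+" using db by simp
  qed
qed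

lemma NB_D:
  assumes "NB M a b"
  shows "lab a v \<noteq> None \<Longrightarrow> node b v = node a v"
    and "lab a v = None \<Longrightarrow> lab b v \<noteq> None \<Longrightarrow> lab a (node b v) = None"
    and "fvs (stk b) \<subseteq> fvs (stk a) \<union> {v. lab a v = None}"
proof -
  have c: "(\<forall>v. lab a v \<noteq> None \<longrightarrow> lab b v = lab a v \<and> node b v = node a v \<and>
        node_parent M b v = node_parent M a v) \<and>
     (\<forall>v. lab a v = None \<longrightarrow> lab b v \<noteq> None \<longrightarrow> lab a (node b v) = None) \<and>
     fvs (stk b) \<subseteq> fvs (stk a) \<union> {v. lab a v = None}" using assms unfolding NB_def .
  show "lab a v \<noteq> None \<Longrightarrow> node b v = node a v" using conjunct1[OF c] by blast
  show "lab a v = None \<Longrightarrow> lab b v \<noteq> None \<Longrightarrow> lab a (node b v) = None"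
    using conjunct1[OF conjunct2[OF c]] by blast
  show "fvs (stk b) \<subseteq> fvs (stk a) \<union> {v. lab a v = None}" using conjunct2[OF conjunct2[OF c]] .
qed

lemma Kp_D:
  assumes "Kp M a a0 t0"
  shows "(a0, node a t0) \<in> (tree_rel M a)\<^sup>+"
    and "lab a w \<noteq> None \<Longrightarrow> (a0, node a w) \<in> (tree_rel M a)\<^sup>* \<Longrightarrow>
      (node a w, node a t0) \<in> (tree_rel M a)\<^sup>+ \<Longrightarrow> w \<notin> fvs (stk a)"
  using assms unfolding Kp_def by blast+

lemma K_NB:
  assumes I: "inv a" and nb: "NB M a b" and al: "lab a a0 \<noteq> None" and tl: "lab a t0 \<noteq> None"
    and K: "Kp M a a0 t0"
  shows "Kp M b a0 t0"
proof -
  have ntb: "node b t0 = node a t0" using NB_D(1)[OF nb tl] .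
  have p1: "(a0, node b t0) \<in> (tree_rel M b)\<^sup>+"
  proof -
    have "(a0, node a t0) \<in> (tree_rel M a)\<^sup>+" by (rule Kp_D(1)[OF K])
    then show ?thesis using tpath_NB[OF I nb al, of "node a t0"] ntb by simp
  qed
  have p2: "w \<notin> fvs (stk b)" if wl: "lab b w \<noteq> None" and q1: "(a0, node b w) \<in> (tree_rel M b)\<^sup>*"
    and q2: "(node b w, node b t0) \<in> (tree_rel M b)\<^sup>+" for w
  proof
    assume wf: "w \<in> fvs (stk b)"
    have q1': "(a0, node b w) \<in> (tree_rel M a)\<^sup>*" using iffD1[OF path_NB[OF I nb al] q1] .
    have nl: "lab a (node b w) \<noteq> None" using rtr_lab[OF I q1' al] .
    have wa: "lab a w \<noteq> None"
    proof
      assume wn: "lab a w = None"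
      have "lab a (node b w) = None" using NB_D(2)[OF nb wn wl] .
      then show False using nl by contradiction
    qed
    have "w \<in> fvs (stk a) \<union> {v. lab a v = None}" by (rule subsetD[OF NB_D(3)[OF nb] wf])
    then have "w \<in> fvs (stk a) \<or> lab a w = None" by simp
    then have wf': "w \<in> fvs (stk a)" using wa by simp
    have nbw: "node b w = node a w" using NB_D(1)[OF nb wa] .
    have nal: "lab a (node b w) \<noteq> None" using nl .
    have "(node b w, node b t0) \<in> (tree_rel M a)\<^sup>+"
      using iffD1[OF tpath_NB[OF I nb nal] q2] .
    then have q2': "(node a w, node a t0) \<in> (tree_rel M a)\<^sup>+" unfolding nbw ntb .
    have q1'': "(a0, node a w) \<in> (tree_rel M a)\<^sup>*" using q1' unfolding nbw .
    have "w \<notin> fvs (stk a)" using Kp_D(2)[OF K wa q1'' q2'] .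
    then show False using wf' by contradiction
  qed
  show ?thesis unfolding Kp_def using p1 p2 by blast
qed

lemma K_init:
  assumes I: "inv a" and to: "lab a t = Some Odd" and tt: "{t, t'} \<in> M"
    and sc: "t' \<in> scanned a" and st: "(a0, t) \<in> (tree_rel M a)\<^sup>+"
  shows "Kp M a a0 t"
proof -
  have nt: "node a t = t" using to by (simp add: node_def)
  have m1: "mate M t' = t" using mate_eq[OF tt] .
  have tt2: "{t', t} \<in> M" using tt by (simp add: insert_commute)
  have m2: "mate M t = t'" using mate_eq[OF tt2] .
  have mt: "matched M t" "matched M t'" using tt tt2 unfolding matched_def by blast+
  have bt': "bs a t'" using I3[OF I to mt(1)] m2 by simp
  have D: "fvs (stk a) \<inter> sub M a t' = {}" using I12[OF I sc bt'] .
  have "w \<notin> fvs (stk a)" if wl: "lab a w \<noteq> None" and q2: "(node a w, t) \<in> (tree_rel M a)\<^sup>+" for w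
  proof -
    obtain c where c1: "(node a w, c) \<in> (tree_rel M a)\<^sup>*" and c2: "(c, t) \<in> tree_rel M a"
      using q2 by (metis tranclD2)
    from edge_cases[OF I c2] have "c = t'"
    proof
      assume "lab a c = Some Odd \<and> t = bse a (par a c) \<and> bs a t"
      then show ?thesis using to by (simp add: bs_def)
    next
      assume h: "bs a c \<and> matched M c \<and> t = mate M c \<and> lab a t = Some Odd"
      then have "mate M t = c" using mate_mate by metis
      then show ?thesis using m2 by simp
    qed
    then have "w \<in> sub M a t'" using wl c1 by (simp add: sub_def)
    then show ?thesis using D by blast
  qed
  then show ?thesis unfolding Kp_def using st nt by simp
qed

lemma blossom_BL:
  assumes I: "inv s" and b: "blossom_step E M s s'"
  shows "\<exists>x R rs y us. BL V E M fs s x R rs y us \<and> s' = BL.s' M s x R rs y us"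
proof -
  from b obtain x R rs y us where stk0: "stk s = Scan x R # rs" and yR: "y \<in> R"
      and ye: "lab s y = Some Even" and pd: "proper_desc M s (bse s y) (bse s x)"
      and us: "set us = {v \<in> {n. (bse s y, n) \<in> (tree_rel M s)\<^sup>* \<and> (n, bse s x) \<in> (tree_rel M s)\<^sup>*}. lab s v = Some Odd}"
      and s': "s' = s\<lparr>lab := (\<lambda>v. if (v \<in> {n. (bse s y, n) \<in> (tree_rel M s)\<^sup>* \<and> (n, bse s x) \<in> (tree_rel M s)\<^sup>*} \<and> lab s v = Some Odd) \<or> (lab s v = Some Even \<and> bse s v \<in> {n. (bse s y, n) \<in> (tree_rel M s)\<^sup>* \<and> (n, bse s x) \<in> (tree_rel M s)\<^sup>*}) then Some Even else lab s v),
                   bse := (\<lambda>v. if (v \<in> {n. (bse s y, n) \<in> (tree_rel M s)\<^sup>* \<and> (n, bse s x) \<in> (tree_rel M s)\<^sup>*} \<and> lab s v = Some Odd) \<or> (lab s v = Some Even \<and> bse s v \<in> {n. (bse s y, n) \<in> (tree_rel M s)\<^sup>* \<and> (n, bse s x) \<in> (tree_rel M s)\<^sup>*}) then bse s x else bse s v),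
                   stk := Calls us # Scan x (R - {y}) # rs\<rparr>"
      unfolding blossom_step_def Let_def by blast
  interpret BL V E M fs s x R rs y us
    by unfold_locales (use I stk0 ye pd us in \<open>auto simp: proper_desc_def\<close>)
  have "s' = BL.s' M s x R rs y us"
    using s' unfolding s'_def inB_def P_def B_def by simp
  then show ?thesis using BL_axioms by blast
qed


lemma step_cases:
  assumes I: "inv s" and st: "step E M s s'"
  shows "NB M s s' \<or> (\<exists>x R rs y us. BL V E M fs s x R rs y us \<and> s' = BL.s' M s x R rs y us)"
proof -
  from st consider "next_tree_step E M s s'" | "finish_step s s'" | "calls_step E M s s'"
    | "scan_step E M s s'" | "blossom_step E M s s'" unfolding step_def by blast
  then show ?thesis
  proof cases
    case 1
    then obtain f fs' where stk0: "stk s = []" and rst: "rest s = f # fs'" and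
      ite: "if (\<exists>p\<in>cp s. f = fst p \<or> f = snd p) then s' = s\<lparr>rest := fs'\<rparr>
         else s' = s\<lparr>lab := (lab s)(f := Some Even), bse := (bse s)(f := f),
                      stk := [Scan f (nm_nbrs E M f)], rest := fs', cur_root := f\<rparr>"
      unfolding next_tree_step_def by blast
    show ?thesis
    proof (cases "\<exists>p\<in>cp s. f = fst p \<or> f = snd p")
      case True
      then have s': "s' = s\<lparr>rest := fs'\<rparr>" using ite by simp
      have "NB M s s'" by (rule NB_same) (simp_all add: s')
      then show ?thesis by blast
    next
      case False
      interpret NT V E M fs s f fs' by unfold_locales (use I stk0 rst False in auto)
      have "s' = NT.s' E M s f fs'" using ite False by (simp add: s'_def)
      then show ?thesis using NB' by simp
    qed
  next
    case 2
    then obtain x rs where stk0: "stk s = Scan x {} # rs"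
      and s': "s' = s\<lparr>stk := rs, scanned := insert x (scanned s)\<rparr>"
      unfolding finish_step_def by blast
    have "NB M s s'" by (rule NB_same) (use s' stk0 in auto)
    then show ?thesis by blast
  next
    case 3
    then consider rs where "stk s = Calls [] # rs" "s' = s\<lparr>stk := rs\<rparr>"
      | u us rs where "stk s = Calls (u # us) # rs" "s' = s\<lparr>stk := Scan u (nm_nbrs E M u) # Calls us # rs\<rparr>"
      unfolding calls_step_def by blast
    then have "NB M s s'"
    proof cases
      case (1 rs)
      show ?thesis by (rule NB_same) (use 1 in auto)
    next
      case (2 u us rs)
      show ?thesis by (rule NB_same) (use 2 in auto)
    qed
    then show ?thesis by blast
  next
    case 4
    then obtain x R rs y where stk0: "stk s = Scan x R # rs" and yR: "y \<in> R" and
      ite: "if lab s y = None \<and> \<not> matched M y then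
           s' = s\<lparr>lab := (lab s)(y := Some Odd), par := (par s)(y := x),
                  cp := insert (cur_root s, y) (cp s), stk := []\<rparr>
         else if lab s y = None \<and> matched M y then
           s' = s\<lparr>lab := (lab s)(y := Some Odd, mate M y := Some Even),
                  par := (par s)(y := x), bse := (bse s)(mate M y := mate M y),
                  stk := Scan (mate M y) (nm_nbrs E M (mate M y)) # Scan x (R - {y}) # rs\<rparr>
         else if lab s y = Some Even \<and> proper_desc M s (bse s y) (bse s x) then False
         else s' = s\<lparr>stk := Scan x (R - {y}) # rs\<rparr>"
      unfolding scan_step_def by blast
    consider "lab s y = None \<and> \<not> matched M y" | "lab s y = None \<and> matched M y"
      | "\<not> (lab s y = None)" by blast
    then have "NB M s s'"
    proof cases
      case 1
      interpret AU V E M fs s x R rs y by unfold_locales (use I stk0 1 in auto)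
      have "s' = AU.s' s x y" using ite 1 by (simp add: s'_def)
      then show ?thesis using NB' by simp
    next
      case 2
      interpret GR V E M fs s x R rs y by unfold_locales (use I stk0 2 in auto)
      have "s' = GR.s' E M s x R rs y" using ite 2 by (simp add: s'_def y'_def)
      then show ?thesis using NB' by simp
    next
      case 3
      then have s': "s' = s\<lparr>stk := Scan x (R - {y}) # rs\<rparr>" using ite by (auto split: if_splits)
      show ?thesis by (rule NB_same) (use s' stk0 in auto)
    qed
    then show ?thesis by blast
  next
    case 5
    then show ?thesis using blossom_BL[OF I] by blast
  qed
qed

lemma lab_step:
  assumes I: "inv s" and st: "step E M s s'"
  shows "lab s v \<noteq> None \<Longrightarrow> lab s' v \<noteq> None" and "lab s v = Some Even \<Longrightarrow> lab s' v = Some Even"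
proof -
  have "(lab s v \<noteq> None \<longrightarrow> lab s' v \<noteq> None) \<and> (lab s v = Some Even \<longrightarrow> lab s' v = Some Even)"
  proof (cases "NB M s s'")
    case True
    have "lab s v \<noteq> None \<Longrightarrow> lab s' v = lab s v" using True unfolding NB_def by blast
    then show ?thesis by auto
  next
    case False
    then obtain x R rs y us where b: "BL V E M fs s x R rs y us" and e: "s' = BL.s' M s x R rs y us"
      using step_cases[OF I st] by blast
    show ?thesis using BL.lab'[OF b, of v] BL.inB_lab[OF b, of v] e by auto
  qed
  then show "lab s v \<noteq> None \<Longrightarrow> lab s' v \<noteq> None" and "lab s v = Some Even \<Longrightarrow> lab s' v = Some Even"
    by blast+
qed

end

theorem lemmaA3:
  fixes V :: "'v set" and E M :: "'v set set" and fs :: "'v list"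
    and run :: "nat \<Rightarrow> 'v st" and n i j :: nat and s t t' :: 'v
  assumes "graph V E" and "M \<subseteq> E" and "matching M"
    and "distinct fs" and "set fs = {v \<in> V. \<not> matched M v}"
    and "execution E M fs run n"
    and "i \<le> j" and "j < n"
    and "lab (run i) t = Some Odd" and "{t, t'} \<in> M" and "lab (run i) t' = Some Even"
    and "t' \<in> scanned (run i)"
    and "lab (run i) s = Some Odd" and "proper_desc M (run i) s t"
    and "blossom_step E M (run j) (run (Suc j))"
    and "lab (run j) s = Some Odd" and "lab (run (Suc j)) s = Some Even"
  shows "lab (run (Suc j)) t = Some Even \<and> bse (run (Suc j)) t = bse (run (Suc j)) s"
proof -
  interpret G V E M fs using assms(1-5) by unfold_locales
  have r0: "run 0 = init_st fs" and St: "\<And>k. k < n \<Longrightarrow> step E M (run k) (run (Suc k))"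
    using assms(6) by (auto simp: execution_def)
  have Inv: "inv (run k)" if "k \<le> n" for k
    using that
  proof (induction k)
    case 0 then show ?case using r0 inv_init by simp
  next
    case (Suc k)
    then show ?case using inv_step[OF _ St[of k]] by simp
  qed
  have monoL: "lab (run k) v \<noteq> None" if "i0 \<le> k" "k \<le> n" "lab (run i0) v \<noteq> None" for i0 k v
    using that(1,2)
  proof (induction k rule: dec_induct)
    case base then show ?case using that(3) by simp
  next
    case (step m)
    then show ?case using lab_step(1)[OF Inv St] by simp
  qed
  have monoE: "lab (run k) v = Some Even" if "i0 \<le> k" "k \<le> n" "lab (run i0) v = Some Even" for i0 k v
    using that(1,2)
  proof (induction k rule: dec_induct)
    case base then show ?case using that(3) by simp
  next
    case (step m)
    then show ?case using lab_step(2)[OF Inv St] by simp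
  qed
  have sodd: "lab (run k) s = Some Odd" if "i \<le> k" "k \<le> j" for k
  proof -
    have "lab (run k) s \<noteq> None" using monoL[of i k s] that assms(8,13) by simp
    moreover have "lab (run k) s \<noteq> Some Even"
    proof
      assume "lab (run k) s = Some Even"
      then have "lab (run j) s = Some Even" using monoE[of k j s] that assms(8) by simp
      then show False using assms(16) by simp
    qed
    ultimately show ?thesis by (cases "lab (run k) s") (auto intro: lbl.exhaust)
  qed
  have tl: "lab (run k) t \<noteq> None" if "i \<le> k" "k \<le> n" for k
    using monoL[of i k t] that assms(9) by simp
  have K: "Kp M (run k) s t" if "i \<le> k" "k \<le> j" for k
    using that
  proof (induction k rule: dec_induct)
    case base
    have "(s, t) \<in> (tree_rel M (run i))\<^sup>+" using assms(14) by (simp add: proper_desc_def)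
    then show ?case using K_init[OF Inv assms(9,10,12)] assms(7,8) by simp
  next
    case (step m)
    have mj: "m < j" using step(2) that(2) by simp
    have Im: "inv (run m)" using Inv mj assms(8) by simp
    have stp: "step E M (run m) (run (Suc m))" using St mj assms(8) by simp
    have so: "lab (run m) s = Some Odd" using sodd step(1) mj by simp
    have so': "lab (run (Suc m)) s = Some Odd" using sodd step(1) mj by simp
    have tm: "lab (run m) t \<noteq> None" using tl step(1) mj assms(8) by simp
    have IH: "Kp M (run m) s t" using step(3) mj by simp
    from step_cases[OF Im stp] show ?case
    proof
      assume "NB M (run m) (run (Suc m))"
      then show ?case using K_NB[OF Im _ _ tm IH] so by simp
    next
      assume "\<exists>x R rs y us. BL V E M fs (run m) x R rs y us \<and> run (Suc m) = BL.s' M (run m) x R rs y us"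
      then obtain x R rs y us where b: "BL V E M fs (run m) x R rs y us"
        and e: "run (Suc m) = BL.s' M (run m) x R rs y us" by blast
      show ?case using BL.K_BL[OF b so _ tm IH] so' e by simp
    qed
  qed
  have Ij: "inv (run j)" using Inv assms(8) by simp
  obtain x R rs y us where b: "BL V E M fs (run j) x R rs y us"
    and e: "run (Suc j) = BL.s' M (run j) x R rs y us"
    using blossom_BL[OF Ij assms(15)] by blast
  have "lab (BL.s' M (run j) x R rs y us) t = Some Even \<and>
        bse (BL.s' M (run j) x R rs y us) t = bse (BL.s' M (run j) x R rs y us) s"
    using BL.final_BL[OF b assms(16) _ tl K] assms(7,8,17) e by simp
  then show ?thesis using e by simp
qed

end
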